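(* Let $\Gamma\subset\operatorname{SU}(2)$ be the binary tetrahedral, binary octahedral, or binary icosahedral group, let $\mathsf 2=\mathbb C^2|_\Gamma$ be its standard representation and $\mathsf 3=\operatorname{S}^2(\mathbb C^2)|_\Gamma$. For an irreducible complex representation $\mathsf i$ of $\Gamma$ and a representation $\mathsf j$ put $P_{\mathsf i,\mathsf j}(t)=\sum_{n\ge0}\dim\operatorname{Hom}_\Gamma\bigl(\mathsf i,\operatorname{S}^n(\mathsf j)\bigr)t^n$. Then $$P_{\mathsf i,\mathsf 3}(t)=\begin{cases}\dfrac{P_{\mathsf i,\mathsf 2}(t^{1/2})}{1-t^2}&\text{if }\mathsf i\text{ is not spinorial},\\[2mm] 0&\text{if }\mathsf i\text{ is spinorial.}\end{cases}$$
   Context: An irreducible representation $\mathsf i$ of $\Gamma$ is called spinorial if the nontrivial central element $-I\in\Gamma$ acts on it by $-1$. For non-spinorial $\mathsf i$, $P_{\mathsf i,\mathsf 2}(t)$ involves only even powers of $t$, so $P_{\mathsf i,\mathsf 2}(t^{1/2})$ is a power series in $t$. *)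

theory Defs
  imports "HOL-Analysis.Analysis" "HOL-Combinatorics.Permutations"
          "HOL-Computational_Algebra.Formal_Power_Series" "HOL-Library.Function_Algebras"
begin

text \<open>The quaternion q0 + q1 i + q2 j + q3 k is realised as the SU(2) matrix
  [[q0 + q1 i, q2 + q3 i], [-q2 + q3 i, q0 - q1 i]] (an injective ring homomorphism).\<close>
definition quat_mat :: "(nat \<Rightarrow> real) \<Rightarrow> complex^2^2" where
  "quat_mat q = (\<chi> r s.
     if r = 1 \<and> s = 1 then Complex (q 0) (q 1)
     else if r = 1 \<and> s = 2 then Complex (q 2) (q 3)
     else if r = 2 \<and> s = 1 then Complex (- q 2) (q 3)
     else Complex (q 0) (- q 1))"

definition hurwitz_units :: "(nat \<Rightarrow> real) set" where
  "hurwitz_units = {q. (\<exists>a<4. \<bar>q a\<bar> = 1 \<and> (\<forall>b<4. b \<noteq> a \<longrightarrow> q b = 0))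
                      \<or> (\<forall>a<4. \<bar>q a\<bar> = 1/2)}"

definition octa_extra :: "(nat \<Rightarrow> real) set" where
  "octa_extra = {q. \<exists>a<4. \<exists>b<4. a \<noteq> b \<and> \<bar>q a\<bar> = 1 / sqrt 2 \<and> \<bar>q b\<bar> = 1 / sqrt 2
                       \<and> (\<forall>c<4. c \<noteq> a \<and> c \<noteq> b \<longrightarrow> q c = 0)}"

definition golden :: real where "golden = (1 + sqrt 5) / 2"

definition icosa_extra :: "(nat \<Rightarrow> real) set" where
  "icosa_extra = {q. \<exists>p. p permutes {..<4} \<and> evenperm p \<and>
      (\<forall>a<4. \<bar>q a\<bar> = [0, 1/2, 1 / (2 * golden), golden / 2] ! (p a))}"

definition binary_tetrahedral :: "(complex^2^2) set" where
  "binary_tetrahedral = quat_mat ` hurwitz_units"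

definition binary_octahedral :: "(complex^2^2) set" where
  "binary_octahedral = quat_mat ` (hurwitz_units \<union> octa_extra)"

definition binary_icosahedral :: "(complex^2^2) set" where
  "binary_icosahedral = quat_mat ` (hurwitz_units \<union> icosa_extra)"

definition is_rep :: "(complex^2^2) set \<Rightarrow> (complex^2^2 \<Rightarrow> complex^'n^'n) \<Rightarrow> bool" where
  "is_rep G \<rho> \<longleftrightarrow> \<rho> (mat 1) = mat 1 \<and> (\<forall>g\<in>G. \<forall>h\<in>G. \<rho> (g ** h) = \<rho> g ** \<rho> h)"

definition irred_rep :: "(complex^2^2) set \<Rightarrow> (complex^2^2 \<Rightarrow> complex^'n^'n) \<Rightarrow> bool" where
  "irred_rep G \<rho> \<longleftrightarrow> is_rep G \<rho> \<and>
     (\<forall>W. vec.subspace W \<and> (\<forall>g\<in>G. \<forall>w\<in>W. \<rho> g *v w \<in> W) \<longrightarrow> W = {0} \<or> W = UNIV)"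

definition spinorial :: "(complex^2^2 \<Rightarrow> complex^'n^'n) \<Rightarrow> bool" where
  "spinorial \<rho> \<longleftrightarrow> \<rho> (- mat 1) = - mat 1"

text \<open>The representations 2 and 3 as m x m matrices indexed by {0..<m}:
  std_mat is the defining representation on C^2, sym2_mat the induced action on
  S^2(C^2) in the basis x^2, xy, y^2 (x = e1, y = e2).\<close>
definition std_mat :: "complex^2^2 \<Rightarrow> nat \<Rightarrow> nat \<Rightarrow> complex" where
  "std_mat g i j = g $ (if i = 0 then 1 else 2) $ (if j = 0 then 1 else 2)"

definition sym2_mat :: "complex^2^2 \<Rightarrow> nat \<Rightarrow> nat \<Rightarrow> complex" where
  "sym2_mat g i j =
     (let a = g $ 1 $ 1; b = g $ 1 $ 2; c = g $ 2 $ 1; d = g $ 2 $ 2 in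
      [[a^2, a*b, b^2], [2*a*c, a*d + b*c, 2*b*d], [c^2, c*d, d^2]] ! i ! j)"

definition idx :: "nat \<Rightarrow> nat \<Rightarrow> nat list set" where
  "idx m n = {xs. length xs = n \<and> set xs \<subseteq> {..<m}}"

text \<open>S^n(C^m) = symmetric tensors in (C^m)^{\<otimes> n} (coordinates on idx m n, zero outside).\<close>
definition SymPow :: "nat \<Rightarrow> nat \<Rightarrow> (nat list \<Rightarrow> complex) set" where
  "SymPow m n = {T. (\<forall>xs. xs \<notin> idx m n \<longrightarrow> T xs = 0) \<and>
                    (\<forall>xs ys. mset xs = mset ys \<longrightarrow> T xs = T ys)}"

text \<open>Action of an m x m matrix A on (C^m)^{\<otimes> n}, i.e. A \<otimes> ... \<otimes> A.\<close>
definition tensor_act :: "nat \<Rightarrow> nat \<Rightarrow> (nat \<Rightarrow> nat \<Rightarrow> complex) \<Rightarrow> (nat list \<Rightarrow> complex) \<Rightarrow> nat list \<Rightarrow> complex" where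
  "tensor_act m n A T = (\<lambda>is. if is \<in> idx m n then
      (\<Sum>js\<in>idx m n. (\<Prod>k<n. A (is ! k) (js ! k)) * T js) else 0)"

definition fscale :: "complex \<Rightarrow> ('n \<Rightarrow> nat list \<Rightarrow> complex) \<Rightarrow> ('n \<Rightarrow> nat list \<Rightarrow> complex)" where
  "fscale c f = (\<lambda>a xs. c * f a xs)"

lemma fscale_vector_space: "vector_space fscale"
  by unfold_locales (auto simp: fscale_def algebra_simps fun_eq_iff)

text \<open>Hom_\<Gamma>(C^'n, S^n(C^m)): a linear map \<Phi> : C^'n \<rightarrow> S^n(C^m) is encoded by the images f a
  of the standard basis vectors e_a, i.e. \<Phi> v = \<Sum>a. v$a \<cdot> f a. Equivariance
  \<Phi>(\<rho> g v) = \<sigma>(g)\<Phi>(v) for all v is equivalently required on the basis vectors.\<close>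
definition HomG :: "(complex^2^2) set \<Rightarrow> (complex^2^2 \<Rightarrow> complex^'n^'n) \<Rightarrow> nat
     \<Rightarrow> (complex^2^2 \<Rightarrow> nat \<Rightarrow> nat \<Rightarrow> complex) \<Rightarrow> nat \<Rightarrow> ('n \<Rightarrow> nat list \<Rightarrow> complex) set" where
  "HomG G \<rho> m \<sigma> n = {f. (\<forall>a. f a \<in> SymPow m n) \<and>
     (\<forall>g\<in>G. \<forall>a. (\<lambda>xs. \<Sum>b\<in>UNIV. (\<rho> g) $ b $ a * f b xs) = tensor_act m n (\<sigma> g) (f a))}"

definition Pser :: "(complex^2^2) set \<Rightarrow> (complex^2^2 \<Rightarrow> complex^'n^'n) \<Rightarrow> nat
     \<Rightarrow> (complex^2^2 \<Rightarrow> nat \<Rightarrow> nat \<Rightarrow> complex) \<Rightarrow> rat fps" where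
  "Pser G \<rho> m \<sigma> = Abs_fps (\<lambda>n. of_nat (vector_space.dim fscale (HomG G \<rho> m \<sigma> n)))"

end

theory Submission imports Defs begin

lemma idx_iff: "xs \<in> idx m n \<longleftrightarrow> length xs = n \<and> (\<forall>x\<in>set xs. x < m)"
  by (auto simp: idx_def)

lemma finite_idx[simp]: "finite (idx m n)"
proof -
  have "idx m n = {xs. set xs \<subseteq> {..<m} \<and> length xs = n}" by (auto simp: idx_def)
  then show ?thesis using finite_lists_length_eq[of "{..<m}" n] by simp
qed

lemma idx_0[simp]: "idx m 0 = {[]}"
  by (auto simp: idx_def)

lemma idx_Suc: "idx m (Suc n) = (\<lambda>(i,xs). i#xs) ` ({..<m} \<times> idx m n)"
proof (rule set_eqI)
  fix xs show "xs \<in> idx m (Suc n) \<longleftrightarrow> xs \<in> (\<lambda>(i,xs). i#xs) ` ({..<m} \<times> idx m n)"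
    by (cases xs) (auto simp: idx_def)
qed

lemma sum_idx_Suc: "(\<Sum>xs\<in>idx m (Suc n). f xs) = (\<Sum>i<m. \<Sum>xs\<in>idx m n. f (i#xs))"
proof -
  have inj: "inj_on (\<lambda>(i,xs). i#xs) ({..<m} \<times> idx m n)" by (auto simp: inj_on_def)
  have "(\<Sum>xs\<in>idx m (Suc n). f xs) = (\<Sum>p\<in>{..<m} \<times> idx m n. f (fst p # snd p))"
    unfolding idx_Suc by (subst sum.reindex[OF inj]) (auto intro!: sum.cong)
  also have "\<dots> = (\<Sum>i<m. \<Sum>xs\<in>idx m n. f (i#xs))"
    by (simp add: sum.cartesian_product split_def)
  finally show ?thesis .
qed

definition pp :: "nat \<Rightarrow> nat \<Rightarrow> (nat list \<Rightarrow> complex) \<Rightarrow> (nat \<Rightarrow> complex) \<Rightarrow> complex" where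
  "pp m n T z = (\<Sum>is\<in>idx m n. T is * prod_list (map z is))"

lemma pp_cong: "(\<And>i. i < m \<Longrightarrow> z i = z' i) \<Longrightarrow> pp m n T z = pp m n T z'"
  unfolding pp_def
  by (intro sum.cong refl arg_cong2[where f="(*)"] arg_cong[where f=prod_list] map_cong)
     (auto simp: idx_def)

lemma pp_add: "pp m n (\<lambda>xs. T1 xs + T2 xs) z = pp m n T1 z + pp m n T2 z"
  by (simp add: pp_def algebra_simps sum.distrib)

lemma pp_scale: "pp m n (\<lambda>xs. c * T xs) z = c * pp m n T z"
  by (simp add: pp_def algebra_simps sum_distrib_left)

lemma pp_diff: "pp m n (\<lambda>xs. T1 xs - T2 xs) z = pp m n T1 z - pp m n T2 z"
  by (simp add: pp_def algebra_simps sum_subtractf)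

lemma prod_nth_map2:
  "length xs = n \<Longrightarrow> length ys = n \<Longrightarrow> (\<Prod>k<n. f (xs!k) (ys!k)) = prod_list (map2 f xs ys)"
proof (induction xs arbitrary: ys n)
  case Nil then show ?case by simp
next
  case (Cons x xs)
  then obtain y ys' where ys: "ys = y # ys'" and n: "n = Suc (length xs)" and l: "length ys' = length xs"
    by (cases ys) auto
  show ?case unfolding n ys using Cons.IH[of "length xs" ys'] l
    by (simp add: prod.lessThan_Suc_shift del: prod.lessThan_Suc)
qed

definition At :: "nat \<Rightarrow> (nat \<Rightarrow> nat \<Rightarrow> complex) \<Rightarrow> (nat \<Rightarrow> complex) \<Rightarrow> nat \<Rightarrow> complex" where
  "At m A z j = (\<Sum>i<m. A i j * z i)"

lemma E1_core:
  "length js = n \<Longrightarrow>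
   (\<Sum>is\<in>idx m n. prod_list (map2 A is js) * prod_list (map z is)) = prod_list (map (At m A z) js)"
proof (induction n arbitrary: js)
  case 0 then show ?case by simp
next
  case (Suc n)
  then obtain j js' where js: "js = j # js'" "length js' = n" by (cases js) auto
  have "(\<Sum>is\<in>idx m (Suc n). prod_list (map2 A is js) * prod_list (map z is))
      = (\<Sum>i<m. \<Sum>is\<in>idx m n. (A i j * z i) * (prod_list (map2 A is js') * prod_list (map z is)))"
    unfolding sum_idx_Suc js by (simp add: algebra_simps)
  also have "\<dots> = (\<Sum>i<m. A i j * z i) * (\<Sum>is\<in>idx m n. prod_list (map2 A is js') * prod_list (map z is))"
    by (simp add: sum_product)
  also have "\<dots> = prod_list (map (At m A z) js)"
    using Suc.IH[OF js(2)] js by (simp add: At_def[abs_def])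
  finally show ?case .
qed

definition supp_in :: "nat \<Rightarrow> nat \<Rightarrow> (nat list \<Rightarrow> complex) \<Rightarrow> bool" where
  "supp_in m n T \<longleftrightarrow> (\<forall>xs. xs \<notin> idx m n \<longrightarrow> T xs = 0)"

lemma SymPow_supp: "T \<in> SymPow m n \<Longrightarrow> supp_in m n T"
  by (simp add: SymPow_def supp_in_def)

lemma tensor_act_alt:
  "tensor_act m n A T = (\<lambda>is. if is \<in> idx m n then
      (\<Sum>js\<in>idx m n. prod_list (map2 A is js) * T js) else 0)"
  unfolding tensor_act_def
  by (intro ext if_cong refl sum.cong, subst prod_nth_map2) (auto simp: idx_def)

lemma E1: "pp m n (tensor_act m n A T) z = pp m n T (At m A z)"
proof -
  have "pp m n (tensor_act m n A T) z =
     (\<Sum>is\<in>idx m n. \<Sum>js\<in>idx m n. T js * (prod_list (map2 A is js) * prod_list (map z is)))"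
    unfolding pp_def tensor_act_alt by (auto simp: sum_distrib_right sum_distrib_left mult_ac intro!: sum.cong)
  also have "\<dots> = (\<Sum>js\<in>idx m n. T js * (\<Sum>is\<in>idx m n. prod_list (map2 A is js) * prod_list (map z is)))"
    by (subst sum.swap) (simp add: sum_distrib_left)
  also have "\<dots> = pp m n T (At m A z)"
    unfolding pp_def by (intro sum.cong refl, subst E1_core) (auto simp: idx_def)
  finally show ?thesis .
qed

lemma prod_map_mset:
  assumes "mset xs = mset ys"
  shows "prod_list (map z xs) = prod_list (map (z::nat\<Rightarrow>complex) ys)"
proof -
  have "prod_list (map z xs) = prod_mset (mset (map z xs))" by (rule prod_mset_prod_list[symmetric])
  also have "mset (map z xs) = mset (map z ys)" using assms by simp
  also have "prod_mset (mset (map z ys)) = prod_list (map z ys)" by (rule prod_mset_prod_list)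
  finally show ?thesis .
qed

lemma mset_idx:
  assumes "mset xs = mset ys"
  shows "xs \<in> idx m n \<longleftrightarrow> ys \<in> idx m n"
proof -
  have "length xs = length ys" using assms by (rule mset_eq_length)
  moreover have "set xs = set ys" using assms by (metis set_mset_mset)
  ultimately show ?thesis unfolding idx_def by simp
qed

lemma SymPow_eq: "T \<in> SymPow m n \<Longrightarrow> mset xs = mset ys \<Longrightarrow> T xs = T ys"
  unfolding SymPow_def by blast

lemma SymPow_out: "T \<in> SymPow m n \<Longrightarrow> xs \<notin> idx m n \<Longrightarrow> T xs = 0"
  unfolding SymPow_def by blast

lemma SymPowI:
  assumes "\<And>xs. xs \<notin> idx m n \<Longrightarrow> T xs = 0" "\<And>xs ys. mset xs = mset ys \<Longrightarrow> T xs = T ys"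
  shows "T \<in> SymPow m n"
  unfolding SymPow_def using assms by blast

lemma SymPow_zero[simp]: "(\<lambda>_. 0) \<in> SymPow m n"
  by (rule SymPowI) auto

lemma SymPow_add: assumes "T1 \<in> SymPow m n" "T2 \<in> SymPow m n" shows "(\<lambda>xs. T1 xs + T2 xs) \<in> SymPow m n"
proof (rule SymPowI)
  fix xs ys :: "nat list" assume "mset xs = mset ys"
  then have "T1 xs = T1 ys" "T2 xs = T2 ys" using SymPow_eq assms by blast+
  then show "T1 xs + T2 xs = T1 ys + T2 ys" by simp
qed (simp add: SymPow_out[OF assms(1)] SymPow_out[OF assms(2)])

lemma SymPow_diff: assumes "T1 \<in> SymPow m n" "T2 \<in> SymPow m n" shows "(\<lambda>xs. T1 xs - T2 xs) \<in> SymPow m n"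
proof (rule SymPowI)
  fix xs ys :: "nat list" assume "mset xs = mset ys"
  then have "T1 xs = T1 ys" "T2 xs = T2 ys" using SymPow_eq assms by blast+
  then show "T1 xs - T2 xs = T1 ys - T2 ys" by simp
qed (simp add: SymPow_out[OF assms(1)] SymPow_out[OF assms(2)])

lemma SymPow_scale: assumes "T1 \<in> SymPow m n" shows "(\<lambda>xs. c * T1 xs) \<in> SymPow m n"
proof (rule SymPowI)
  fix xs ys :: "nat list" assume "mset xs = mset ys"
  then have "T1 xs = T1 ys" using SymPow_eq assms by blast
  then show "c * T1 xs = c * T1 ys" by simp
qed (simp add: SymPow_out[OF assms(1)])

lemma SymPow_sum: "finite B \<Longrightarrow> (\<And>b. b \<in> B \<Longrightarrow> T b \<in> SymPow m n) \<Longrightarrow> (\<lambda>xs. \<Sum>b\<in>B. c b * T b xs) \<in> SymPow m n"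
proof (induction B rule: finite_induct)
  case empty show ?case by simp
next
  case (insert b B)
  have e: "(\<lambda>xs. \<Sum>b'\<in>insert b B. c b' * T b' xs) = (\<lambda>xs. c b * T b xs + (\<Sum>b'\<in>B. c b' * T b' xs))"
    using insert(1,2) by simp
  have 1: "(\<lambda>xs. \<Sum>b'\<in>B. c b' * T b' xs) \<in> SymPow m n" by (rule insert.IH) (simp add: insert.prems)
  have 2: "T b \<in> SymPow m n" by (simp add: insert.prems)
  show ?case unfolding e by (rule SymPow_add[OF SymPow_scale[OF 2] 1])
qed

definition cls :: "nat \<Rightarrow> nat \<Rightarrow> nat list \<Rightarrow> nat list set" where
  "cls m n ks = {js\<in>idx m n. mset js = mset ks}"

lemma finite_cls[simp]: "finite (cls m n ks)" by (simp add: cls_def)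

lemma cls_mem: "ks \<in> idx m n \<Longrightarrow> ks \<in> cls m n ks" by (simp add: cls_def)

lemma card_cls_pos: "ks \<in> idx m n \<Longrightarrow> card (cls m n ks) > 0"
proof -
  assume "ks \<in> idx m n"
  then have "cls m n ks \<noteq> {}" using cls_mem by blast
  then show ?thesis by (simp add: card_gt_0_iff)
qed

lemma cls_eq: "mset xs = mset ys \<Longrightarrow> cls m n xs = cls m n ys"
  by (simp add: cls_def)

definition Symm :: "nat \<Rightarrow> nat \<Rightarrow> (nat list \<Rightarrow> complex) \<Rightarrow> nat list \<Rightarrow> complex" where
  "Symm m n c = (\<lambda>ks. if ks \<in> idx m n then (\<Sum>js\<in>cls m n ks. c js) / of_nat (card (cls m n ks)) else 0)"

lemma Symm_SymPow: "Symm m n c \<in> SymPow m n"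
proof (rule SymPowI)
  fix xs ys :: "nat list" assume e: "mset xs = mset ys"
  show "Symm m n c xs = Symm m n c ys"
    unfolding Symm_def using mset_idx[OF e, of m n] cls_eq[OF e, of m n] by simp
qed (simp add: Symm_def)

lemma Symm_pp: "pp m n (Symm m n c) z = (\<Sum>ks\<in>idx m n. c ks * prod_list (map z ks))"
proof -
  let ?N = "\<lambda>ks. of_nat (card (cls m n ks)) :: complex"
  have "pp m n (Symm m n c) z = (\<Sum>ks\<in>idx m n. \<Sum>js\<in>{js. js \<in> idx m n \<and> mset ks = mset js}.
           c js * prod_list (map z js) / ?N js)"
    unfolding pp_def Symm_def
  proof (intro sum.cong refl)
    fix ks assume ks: "ks \<in> idx m n"
    have "(if ks \<in> idx m n then (\<Sum>js\<in>cls m n ks. c js) / ?N ks else 0) * prod_list (map z ks)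
        = (\<Sum>js\<in>cls m n ks. c js * prod_list (map z ks) / ?N ks)"
      using ks by (simp add: sum_divide_distrib sum_distrib_right)
    also have "\<dots> = (\<Sum>js\<in>{js. js \<in> idx m n \<and> mset ks = mset js}. c js * prod_list (map z js) / ?N js)"
    proof (rule sum.cong)
      show "cls m n ks = {js. js \<in> idx m n \<and> mset ks = mset js}" by (auto simp: cls_def)
      fix js assume "js \<in> {js. js \<in> idx m n \<and> mset ks = mset js}"
      then have e: "mset ks = mset js" by simp
      show "c js * prod_list (map z ks) / ?N ks = c js * prod_list (map z js) / ?N js"
        using prod_map_mset[OF e, of z] cls_eq[OF e, of m n] by simp
    qed
    finally show "(if ks \<in> idx m n then (\<Sum>js\<in>cls m n ks. c js) / ?N ks else 0) * prod_list (map z ks)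
        = (\<Sum>js\<in>{js. js \<in> idx m n \<and> mset ks = mset js}. c js * prod_list (map z js) / ?N js)" .
  qed
  also have "\<dots> = (\<Sum>js\<in>idx m n. \<Sum>ks\<in>{ks. ks \<in> idx m n \<and> mset ks = mset js}.
           c js * prod_list (map z js) / ?N js)"
    by (rule sum.swap_restrict) auto
  also have "\<dots> = (\<Sum>js\<in>idx m n. c js * prod_list (map z js))"
  proof (intro sum.cong refl)
    fix js assume js: "js \<in> idx m n"
    have "{ks. ks \<in> idx m n \<and> mset ks = mset js} = cls m n js" by (auto simp: cls_def)
    then show "(\<Sum>ks\<in>{ks. ks \<in> idx m n \<and> mset ks = mset js}. c js * prod_list (map z js) / ?N js)
          = c js * prod_list (map z js)"
      using card_cls_pos[OF js] by (simp add: card_gt_0_iff)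
  qed
  finally show ?thesis .
qed

lemma tensor_act_SymPow:
  assumes T: "T \<in> SymPow m n"
  shows "tensor_act m n A T \<in> SymPow m n"
proof -
  have sym: "tensor_act m n A T xs = tensor_act m n A T ys" if eq: "mset xs = mset ys" for xs ys
  proof (cases "ys \<in> idx m n")
    case False then show ?thesis using mset_idx[OF eq] by (simp add: tensor_act_def)
  next
    case True
    then have xs: "xs \<in> idx m n" using mset_idx[OF eq] by simp
    obtain p where p: "p permutes {..<length ys}" "permute_list p ys = xs"
      using mset_eq_permutation[OF eq] by blast
    have ly: "length ys = n" using True by (simp add: idx_def)
    have pn: "p permutes {..<n}" using p ly by simp
    have bij: "bij_betw (permute_list p) (idx m n) (idx m n)"
    proof (rule bij_betwI[where g="permute_list (inv p)"])
      show "permute_list p \<in> idx m n \<rightarrow> idx m n"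
        using pn by (auto simp: idx_def)
      show "permute_list (inv p) \<in> idx m n \<rightarrow> idx m n"
      proof
        fix x assume x: "x \<in> idx m n"
        have ip: "inv p permutes {..<length x}" using pn permutes_inv x by (simp add: idx_def)
        have "set (permute_list (inv p) x) = set x" using mset_permute_list[OF ip] by (metis set_mset_mset)
        then show "permute_list (inv p) x \<in> idx m n" using x by (simp add: idx_def)
      qed
      fix x assume "x \<in> idx m n"
      then have lx: "length x = n" by (simp add: idx_def)
      have ip: "inv p permutes {..<n}" using pn permutes_inv by blast
      have "permute_list (inv p) (permute_list p x) = permute_list (p \<circ> inv p) x"
        using permute_list_compose[of "inv p" x p] ip lx by simp
      then show "permute_list (inv p) (permute_list p x) = x"
        by (simp add: permutes_inv_o(1)[OF pn])
      have "permute_list p (permute_list (inv p) x) = permute_list (inv p \<circ> p) x"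
        using permute_list_compose[of p x "inv p"] pn lx by simp
      then show "permute_list p (permute_list (inv p) x) = x"
        by (simp add: permutes_inv_o(2)[OF pn])
    qed
    have "tensor_act m n A T xs = (\<Sum>js\<in>idx m n. (\<Prod>k<n. A (xs!k) (js!k)) * T js)"
      using xs by (simp add: tensor_act_def)
    also have "\<dots> = (\<Sum>js\<in>idx m n. (\<Prod>k<n. A (xs!k) (permute_list p js!k)) * T (permute_list p js))"
      using sum.reindex_bij_betw[OF bij, of "\<lambda>js. (\<Prod>k<n. A (xs!k) (js!k)) * T js"] by simp
    also have "\<dots> = (\<Sum>js\<in>idx m n. (\<Prod>k<n. A (ys!k) (js!k)) * T js)"
    proof (intro sum.cong refl)
      fix js assume js: "js \<in> idx m n"
      then have lj: "length js = n" by (simp add: idx_def)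
      have "mset (permute_list p js) = mset js" using mset_permute_list[of p js] pn lj by simp
      then have "T (permute_list p js) = T js" by (rule SymPow_eq[OF T])
      moreover have "(\<Prod>k<n. A (xs!k) (permute_list p js!k)) = (\<Prod>k<n. A (ys!(p k)) (js!(p k)))"
      proof (intro prod.cong refl)
        fix k assume k: "k \<in> {..<n}"
        have "xs ! k = ys ! p k" using p ly k permute_list_nth[of p ys k] by auto
        moreover have "permute_list p js ! k = js ! p k" using pn lj k permute_list_nth[of p js k] by auto
        ultimately show "A (xs!k) (permute_list p js!k) = A (ys!(p k)) (js!(p k))" by simp
      qed
      moreover have "\<dots> = (\<Prod>k<n. A (ys!k) (js!k))"
        using prod.permute[OF pn, of "\<lambda>k. A (ys!k) (js!k)"] by (simp add: comp_def)
      ultimately show "(\<Prod>k<n. A (xs!k) (permute_list p js!k)) * T (permute_list p js) = (\<Prod>k<n. A (ys!k) (js!k)) * T js"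
        by simp
    qed
    also have "\<dots> = tensor_act m n A T ys"
      using True by (simp add: tensor_act_def)
    finally show ?thesis .
  qed
  show ?thesis by (rule SymPowI[OF _ sym]) (simp add: tensor_act_def)
qed

definition zz2 :: "complex \<Rightarrow> nat \<Rightarrow> complex" where
  "zz2 a = (\<lambda>i. if i = 0 then 1 else a)"

definition zz3 :: "complex \<Rightarrow> complex \<Rightarrow> nat \<Rightarrow> complex" where
  "zz3 a b = (\<lambda>i. if i = 0 then 1 else if i = 1 then a else b)"

lemma prod_zz3: "set xs \<subseteq> {..<3} \<Longrightarrow>
  prod_list (map (zz3 a b) xs) = a ^ count (mset xs) 1 * b ^ count (mset xs) 2"
proof (induction xs)
  case Nil then show ?case by simp
next
  case (Cons x xs)
  then have "x < 3" by auto
  then have "x = 0 \<or> x = 1 \<or> x = 2" by auto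
  with Cons show ?case by (auto simp: zz3_def)
qed

lemma prod_zz2: "set xs \<subseteq> {..<2} \<Longrightarrow>
  prod_list (map (zz2 a) xs) = a ^ count (mset xs) 1"
proof (induction xs)
  case Nil then show ?case by simp
next
  case (Cons x xs)
  then have "x < 2" by auto
  then have "x = 0 \<or> x = 1" by auto
  with Cons show ?case by (auto simp: zz2_def)
qed

lemma length_counts3: fixes xs :: "nat list" shows "set xs \<subseteq> {..<3} \<Longrightarrow>
  length xs = count (mset xs) 0 + count (mset xs) 1 + count (mset xs) 2"
proof (induction xs)
  case Nil then show ?case by simp
next
  case (Cons x xs)
  then have "x = 0 \<or> x = 1 \<or> x = 2" by auto
  with Cons show ?case by auto
qed

lemma length_counts2: fixes xs :: "nat list" shows "set xs \<subseteq> {..<2} \<Longrightarrow>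
  length xs = count (mset xs) 0 + count (mset xs) 1"
proof (induction xs)
  case Nil then show ?case by simp
next
  case (Cons x xs)
  then have "x = 0 \<or> x = 1" by auto
  with Cons show ?case by auto
qed

lemma mset_eq_counts3:
  assumes "xs \<in> idx 3 n" "ys \<in> idx 3 n"
    "count (mset xs) 1 = count (mset ys) 1" "count (mset xs) 2 = count (mset ys) 2"
  shows "mset xs = mset ys"
proof (rule multiset_eqI)
  fix x
  have sx: "set xs \<subseteq> {..<3}" and sy: "set ys \<subseteq> {..<3}" and l: "length xs = length ys"
    using assms(1,2) by (auto simp: idx_def)
  show "count (mset xs) x = count (mset ys) x"
  proof (cases "x < 3")
    case True
    then have "x = 0 \<or> x = 1 \<or> x = 2" by auto
    then show ?thesis using length_counts3[OF sx] length_counts3[OF sy] l assms(3,4) by auto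
  next
    case False
    then have "x \<notin> set xs" "x \<notin> set ys" using sx sy by auto
    then have "count (mset xs) x = 0" "count (mset ys) x = 0" by simp_all
    then show ?thesis by (simp del: count_mset_0_iff)
  qed
qed

lemma mset_eq_counts2:
  assumes "xs \<in> idx 2 n" "ys \<in> idx 2 n" "count (mset xs) 1 = count (mset ys) 1"
  shows "mset xs = mset ys"
proof (rule multiset_eqI)
  fix x
  have sx: "set xs \<subseteq> {..<2}" and sy: "set ys \<subseteq> {..<2}" and l: "length xs = length ys"
    using assms(1,2) by (auto simp: idx_def)
  show "count (mset xs) x = count (mset ys) x"
  proof (cases "x < 2")
    case True
    then have "x = 0 \<or> x = 1" by auto
    then show ?thesis using length_counts2[OF sx] length_counts2[OF sy] l assms(3) by auto
  next
    case False
    then have "x \<notin> set xs" "x \<notin> set ys" using sx sy by auto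
    then have "count (mset xs) x = 0" "count (mset ys) x = 0" by simp_all
    then show ?thesis by (simp del: count_mset_0_iff)
  qed
qed

lemma univ_coeffs_zero:
  fixes c :: "nat \<Rightarrow> complex"
  assumes F: "finite F" and h: "\<And>x. x \<notin> F \<Longrightarrow> (\<Sum>i\<le>n. c i * x^i) = 0"
  shows "\<forall>i\<le>n. c i = 0"
proof (rule ccontr)
  assume "\<not> (\<forall>i\<le>n. c i = 0)"
  then have "finite {z. (\<Sum>i\<le>n. c i * z^i) = 0}" using polyfun_finite_roots[of c n] by blast
  moreover have "- F \<subseteq> {z. (\<Sum>i\<le>n. c i * z^i) = 0}" using h by auto
  ultimately have "finite (- F)" by (rule finite_subset[rotated])
  with F have "finite (UNIV :: complex set)" by (metis Compl_partition2 finite_Un)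
  then show False by (simp add: infinite_UNIV_char_0)
qed

lemma finite_sqrt_set: "finite {a::complex. a * a = b}"
proof -
  define c :: "nat \<Rightarrow> complex" where "c = (\<lambda>i. if i = 0 then - b else if i = 2 then 1 else 0)"
  have "finite {z. (\<Sum>i\<le>2. c i * z^i) = 0}" using polyfun_finite_roots[of c 2] by (auto simp: c_def)
  moreover have "{a::complex. a * a = b} \<subseteq> {z. (\<Sum>i\<le>2. c i * z^i) = 0}"
    by (auto simp: c_def numeral_2_eq_2 power2_eq_square)
  ultimately show ?thesis by (rule finite_subset[rotated])
qed

lemma count_le_n: "ks \<in> idx m n \<Longrightarrow> count (mset ks) x \<le> n"
  by (metis count_le_size idx_iff size_mset)

lemma fiber_const_sum:
  assumes "finite S" "k \<in> S" "\<And>k'. k' \<in> S \<Longrightarrow> T k' = T k" "(\<Sum>k'\<in>S. T k') = (0::complex)"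
  shows "T k = 0"
proof -
  have "(\<Sum>k'\<in>S. T k') = of_nat (card S) * T k" using assms(3) by simp
  moreover have "card S > 0" using assms(1,2) card_gt_0_iff by blast
  ultimately show ?thesis using assms(4) by simp
qed

lemma E2_3:
  assumes T: "T \<in> SymPow 3 n" and h: "\<And>a b. b \<noteq> a * a \<Longrightarrow> pp 3 n T (zz3 a b) = 0"
  shows "T = (\<lambda>_. 0)"
proof -
  define C where "C i j = (\<Sum>ks\<in>{ks\<in>idx 3 n. (count (mset ks) 1, count (mset ks) 2) = (i, j)}. T ks)" for i j
  have pp_eq: "pp 3 n T (zz3 a b) = (\<Sum>i\<le>n. (\<Sum>j\<le>n. C i j * b^j) * a^i)" for a b
  proof -
    let ?g = "\<lambda>ks. (count (mset ks) 1, count (mset ks) 2)"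
    have "pp 3 n T (zz3 a b) = (\<Sum>ks\<in>idx 3 n. T ks * (a ^ count (mset ks) 1 * b ^ count (mset ks) 2))"
      unfolding pp_def by (intro sum.cong refl) (simp add: prod_zz3 idx_def subset_iff)
    also have "\<dots> = (\<Sum>p\<in>{..n}\<times>{..n}. \<Sum>ks\<in>{ks\<in>idx 3 n. ?g ks = p}. T ks * (a ^ count (mset ks) 1 * b ^ count (mset ks) 2))"
      by (rule sum.group[symmetric]) (auto simp: count_le_n)
    also have "\<dots> = (\<Sum>p\<in>{..n}\<times>{..n}. C (fst p) (snd p) * (a ^ fst p * b ^ snd p))"
      unfolding C_def sum_distrib_right
      by (intro sum.cong refl) auto
    also have "\<dots> = (\<Sum>i\<le>n. \<Sum>j\<le>n. C i j * (a^i * b^j))"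
      by (simp add: sum.cartesian_product split_def)
    also have "\<dots> = (\<Sum>i\<le>n. (\<Sum>j\<le>n. C i j * b^j) * a^i)"
      by (simp add: sum_distrib_left sum_distrib_right mult_ac)
    finally show ?thesis .
  qed
  have 1: "\<forall>i\<le>n. (\<Sum>j\<le>n. C i j * b^j) = 0" for b
  proof (rule univ_coeffs_zero[OF finite_sqrt_set[of b]])
    fix a assume "a \<notin> {a. a * a = b}"
    then show "(\<Sum>i\<le>n. (\<Sum>j\<le>n. C i j * b^j) * a^i) = 0" using h[of b a] pp_eq by auto
  qed
  have 2: "C i j = 0" if "i \<le> n" "j \<le> n" for i j
  proof -
    have "\<forall>b. (\<Sum>j\<le>n. C i j * b^j) = 0" using 1 that by blast
    then show ?thesis using polyfun_eq_0[of "C i" n] that by blast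
  qed
  show ?thesis
  proof
    fix ks
    show "T ks = 0"
    proof (cases "ks \<in> idx 3 n")
      case False then show ?thesis using SymPow_out[OF T] by blast
    next
      case True
      let ?S = "{ks'\<in>idx 3 n. (count (mset ks') 1, count (mset ks') 2) = (count (mset ks) 1, count (mset ks) 2)}"
      show ?thesis
      proof (rule fiber_const_sum[of ?S])
        show "finite ?S" by simp
        show "ks \<in> ?S" using True by simp
        show "T k' = T ks" if "k' \<in> ?S" for k'
          using that True by (intro SymPow_eq[OF T] mset_eq_counts3[of _ n]) auto
        show "(\<Sum>k'\<in>?S. T k') = 0" using 2[of "count (mset ks) 1" "count (mset ks) 2"] True
          by (simp add: C_def count_le_n)
      qed
    qed
  qed
qed

lemma E2_2:
  assumes W: "W \<in> SymPow 2 n" and h: "\<And>a. pp 2 n W (zz2 a) = 0"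
  shows "W = (\<lambda>_. 0)"
proof -
  define C where "C i = (\<Sum>ks\<in>{ks\<in>idx 2 n. count (mset ks) 1 = i}. W ks)" for i
  have pp_eq: "pp 2 n W (zz2 a) = (\<Sum>i\<le>n. C i * a^i)" for a
  proof -
    let ?g = "\<lambda>ks. count (mset ks) 1"
    have "pp 2 n W (zz2 a) = (\<Sum>ks\<in>idx 2 n. W ks * a ^ count (mset ks) 1)"
      unfolding pp_def by (intro sum.cong refl) (simp add: prod_zz2 idx_def subset_iff)
    also have "\<dots> = (\<Sum>i\<in>{..n}. \<Sum>ks\<in>{ks\<in>idx 2 n. ?g ks = i}. W ks * a ^ count (mset ks) 1)"
      by (rule sum.group[symmetric]) (auto simp: count_le_n)
    also have "\<dots> = (\<Sum>i\<le>n. C i * a^i)"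
      unfolding C_def sum_distrib_right by (intro sum.cong refl) auto
    finally show ?thesis .
  qed
  have 2: "C i = 0" if "i \<le> n" for i
    using polyfun_eq_0[of C n] h pp_eq that by auto
  show ?thesis
  proof
    fix ks
    show "W ks = 0"
    proof (cases "ks \<in> idx 2 n")
      case False then show ?thesis using SymPow_out[OF W] by blast
    next
      case True
      let ?S = "{ks'\<in>idx 2 n. count (mset ks') 1 = count (mset ks) 1}"
      show ?thesis
      proof (rule fiber_const_sum[of ?S])
        show "finite ?S" by simp
        show "ks \<in> ?S" using True by simp
        show "W k' = W ks" if "k' \<in> ?S" for k'
          using that True by (intro SymPow_eq[OF W] mset_eq_counts2[of _ n]) auto
        show "(\<Sum>k'\<in>?S. W k') = 0" using 2[of "count (mset ks) 1"] True
          by (simp add: C_def count_le_n)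
      qed
    qed
  qed
qed

lemma E2_3eq:
  assumes "T1 \<in> SymPow 3 n" "T2 \<in> SymPow 3 n" "\<And>z. pp 3 n T1 z = pp 3 n T2 z"
  shows "T1 = T2"
proof -
  have "(\<lambda>xs. T1 xs - T2 xs) = (\<lambda>_. 0)"
    by (rule E2_3[OF SymPow_diff[OF assms(1,2)]]) (simp add: pp_diff assms(3))
  then show ?thesis by (metis (no_types) eq_iff_diff_eq_0 ext)
qed

lemma E2_2eq:
  assumes "T1 \<in> SymPow 2 n" "T2 \<in> SymPow 2 n" "\<And>z. pp 2 n T1 z = pp 2 n T2 z"
  shows "T1 = T2"
proof -
  have "(\<lambda>xs. T1 xs - T2 xs) = (\<lambda>_. 0)"
    by (rule E2_2[OF SymPow_diff[OF assms(1,2)]]) (simp add: pp_diff assms(3))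
  then show ?thesis by (metis (no_types) eq_iff_diff_eq_0 ext)
qed

definition push :: "(nat list \<Rightarrow> nat list) \<Rightarrow> nat list set \<Rightarrow> (nat list \<Rightarrow> complex) \<Rightarrow> nat list \<Rightarrow> complex" where
  "push h I c = (\<lambda>w. \<Sum>ks\<in>{ks\<in>I. h ks = w}. c ks)"

lemma push_sum:
  assumes "finite I" "finite J" "h ` I \<subseteq> J"
  shows "(\<Sum>w\<in>J. push h I c w * F w) = (\<Sum>ks\<in>I. c ks * F (h ks))"
proof -
  have "(\<Sum>w\<in>J. push h I c w * F w) = (\<Sum>w\<in>J. \<Sum>ks\<in>{ks\<in>I. h ks = w}. c ks * F (h ks))"
    unfolding push_def sum_distrib_right by (intro sum.cong refl) auto
  also have "\<dots> = (\<Sum>ks\<in>I. c ks * F (h ks))"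
    by (rule sum.group[OF assms])
  finally show ?thesis .
qed

fun expand :: "nat list \<Rightarrow> nat list" where
  "expand [] = []"
| "expand (i # ks) = (if i = 0 then [0,0] else if i = 1 then [0,1] else [1,1]) @ expand ks"

fun pairsum :: "nat list \<Rightarrow> nat list" where
  "pairsum (u # v # w) = (u + v) # pairsum w"
| "pairsum _ = []"

definition qv :: "(nat \<Rightarrow> complex) \<Rightarrow> nat \<Rightarrow> complex" where
  "qv z = (\<lambda>i. if i = 0 then z 0 * z 0 else if i = 1 then z 0 * z 1 else z 1 * z 1)"

lemma expand_idx: "ks \<in> idx 3 n \<Longrightarrow> expand ks \<in> idx 2 (2*n)"
proof (induction ks arbitrary: n)
  case Nil then show ?case by (simp add: idx_def)
next
  case (Cons i ks)
  then obtain n' where n: "n = Suc n'" and "ks \<in> idx 3 n'" by (auto simp: idx_def)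
  with Cons have "expand ks \<in> idx 2 (2*n')" by auto
  then show ?case using n by (auto simp: idx_def)
qed

lemma prod_expand: "prod_list (map z (expand ks)) = prod_list (map (qv z) ks)"
  by (induction ks) (auto simp: qv_def)

lemma pairsum_idx: "w \<in> idx 2 (2*n) \<Longrightarrow> pairsum w \<in> idx 3 n"
proof (induction n arbitrary: w)
  case 0 then show ?case by (simp add: idx_def)
next
  case (Suc n)
  then obtain u v w' where w: "w = u # v # w'" "u < 2" "v < 2" "w' \<in> idx 2 (2*n)"
    by (cases w rule: pairsum.cases) (auto simp: idx_def)
  with Suc.IH[of w'] show ?case by (auto simp: idx_def)
qed

lemma prod_pairsum_qv: "w \<in> idx 2 (2*n) \<Longrightarrow> prod_list (map (qv z) (pairsum w)) = prod_list (map z w)"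
proof (induction n arbitrary: w)
  case 0 then show ?case by (simp add: idx_def)
next
  case (Suc n)
  then obtain u v w' where w: "w = u # v # w'" "u < 2" "v < 2" "w' \<in> idx 2 (2*n)"
    by (cases w rule: pairsum.cases) (auto simp: idx_def)
  have "u = 0 \<or> u = 1" "v = 0 \<or> v = 1" using w(2,3) by auto
  then have "qv z (u + v) = z u * z v" by (auto simp: qv_def mult_ac)
  with Suc.IH[OF w(4)] w(1) show ?case by simp
qed

definition Dd :: "nat \<Rightarrow> nat \<Rightarrow> complex" where
  "Dd i j = (if i = 1 \<and> j = 1 then 1 else if (i = 0 \<and> j = 2) \<or> (i = 2 \<and> j = 0) then - 1/2 else 0)"

definition delta :: "(nat \<Rightarrow> complex) \<Rightarrow> complex" where
  "delta z = z 1 * z 1 - z 0 * z 2"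

definition muM :: "nat \<Rightarrow> (nat list \<Rightarrow> complex) \<Rightarrow> nat list \<Rightarrow> complex" where
  "muM n T = Symm 2 (2*n) (push expand (idx 3 n) T)"

definition sM :: "nat \<Rightarrow> (nat list \<Rightarrow> complex) \<Rightarrow> nat list \<Rightarrow> complex" where
  "sM n W = Symm 3 n (push pairsum (idx 2 (2*n)) W)"

definition rM :: "nat \<Rightarrow> (nat list \<Rightarrow> complex) \<Rightarrow> nat list \<Rightarrow> complex" where
  "rM n T = Symm 3 n (\<lambda>ks. case ks of i # j # js \<Rightarrow> Dd i j * T js | _ \<Rightarrow> 0)"

lemma muM_SymPow: "muM n T \<in> SymPow 2 (2*n)" by (simp add: muM_def Symm_SymPow)
lemma sM_SymPow: "sM n T \<in> SymPow 3 n" by (simp add: sM_def Symm_SymPow)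
lemma rM_SymPow: "rM n T \<in> SymPow 3 n" by (simp add: rM_def Symm_SymPow)

lemma pp_muM: "pp 2 (2*n) (muM n T) z = pp 3 n T (qv z)"
proof -
  have "pp 2 (2*n) (muM n T) z = (\<Sum>w\<in>idx 2 (2*n). push expand (idx 3 n) T w * prod_list (map z w))"
    unfolding muM_def Symm_pp ..
  also have "\<dots> = (\<Sum>ks\<in>idx 3 n. T ks * prod_list (map z (expand ks)))"
    by (rule push_sum) (auto simp: expand_idx)
  also have "\<dots> = pp 3 n T (qv z)" unfolding pp_def prod_expand ..
  finally show ?thesis .
qed

lemma pp_sM: "pp 3 n (sM n W) z = (\<Sum>w\<in>idx 2 (2*n). W w * prod_list (map z (pairsum w)))"
proof -
  have "pp 3 n (sM n W) z = (\<Sum>ks\<in>idx 3 n. push pairsum (idx 2 (2*n)) W ks * prod_list (map z ks))"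
    unfolding sM_def Symm_pp ..
  also have "\<dots> = (\<Sum>w\<in>idx 2 (2*n). W w * prod_list (map z (pairsum w)))"
    by (rule push_sum) (auto simp: pairsum_idx)
  finally show ?thesis .
qed

lemma sum3: fixes f :: "nat \<Rightarrow> complex" shows "(\<Sum>k<3. f k) = f 0 + f 1 + (f 2 :: complex)"
  by (simp add: numeral_3_eq_3 numeral_2_eq_2)

lemma sum2: fixes f :: "nat \<Rightarrow> complex" shows "(\<Sum>k<2. f k) = f 0 + (f 1 :: complex)"
  by (simp add: numeral_2_eq_2)

lemma delta_sum: "(\<Sum>i<3. \<Sum>j<3. Dd i j * z i * z j) = delta z"
  by (simp add: sum3 Dd_def delta_def algebra_simps)

lemma pp_rM:
  assumes "2 \<le> n"
  shows "pp 3 n (rM n T) z = delta z * pp 3 (n-2) T z"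
proof -
  obtain k where n: "n = Suc (Suc k)" using assms by (metis add_2_eq_Suc le_Suc_ex)
  have "pp 3 n (rM n T) z = (\<Sum>ks\<in>idx 3 n. (case ks of i # j # js \<Rightarrow> Dd i j * T js | _ \<Rightarrow> 0) * prod_list (map z ks))"
    unfolding rM_def Symm_pp ..
  also have "\<dots> = (\<Sum>i<3. \<Sum>j<3. \<Sum>js\<in>idx 3 k. (case i # j # js of i # j # js \<Rightarrow> Dd i j * T js | _ \<Rightarrow> 0) * prod_list (map z (i # j # js)))"
    unfolding n sum_idx_Suc ..
  also have "\<dots> = (\<Sum>i<3. \<Sum>j<3. \<Sum>js\<in>idx 3 k. (Dd i j * z i * z j) * (T js * prod_list (map z js)))"
    by (intro sum.cong refl) (simp add: mult_ac)
  also have "\<dots> = (\<Sum>i<3. \<Sum>j<3. (Dd i j * z i * z j) * pp 3 k T z)"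
    unfolding pp_def by (simp add: sum_distrib_left)
  also have "\<dots> = (\<Sum>i<3. \<Sum>j<3. Dd i j * z i * z j) * pp 3 k T z"
    by (simp add: sum_distrib_right)
  also have "\<dots> = delta z * pp 3 (n-2) T z" using n delta_sum by simp
  finally show ?thesis .
qed

lemma std_vals: "std_mat g 0 0 = g$1$1" "std_mat g 0 1 = g$1$2" "std_mat g 1 0 = g$2$1" "std_mat g 1 1 = g$2$2"
  by (simp_all add: std_mat_def)

lemma sym2_vals:
  "sym2_mat g 0 0 = (g$1$1)^2" "sym2_mat g 0 1 = g$1$1 * g$1$2" "sym2_mat g 0 2 = (g$1$2)^2"
  "sym2_mat g 1 0 = 2 * g$1$1 * g$2$1" "sym2_mat g 1 1 = g$1$1 * g$2$2 + g$1$2 * g$2$1" "sym2_mat g 1 2 = 2 * g$1$2 * g$2$2"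
  "sym2_mat g 2 0 = (g$2$1)^2" "sym2_mat g 2 1 = g$2$1 * g$2$2" "sym2_mat g 2 2 = (g$2$2)^2"
  by (simp_all add: sym2_mat_def Let_def numeral_2_eq_2)

lemma suc2: "Suc (Suc 0) = 2" by simp

lemma less3_cases: "(i::nat) < 3 \<Longrightarrow> i = 0 \<or> i = 1 \<or> i = 2" by auto
lemma less2_cases: "(i::nat) < 2 \<Longrightarrow> i = 0 \<or> i = 1" by auto

lemma factor_mu: "i < 3 \<Longrightarrow> At 3 (sym2_mat g) (qv z) i = qv (At 2 (std_mat g) z) i"
  by (drule less3_cases) (auto simp: At_def sum3 sum2 qv_def sym2_vals std_vals sym2_vals[unfolded One_nat_def] std_vals[unfolded One_nat_def] power2_eq_square algebra_simps)

lemma factor_s: "a < 2 \<Longrightarrow> b < 2 \<Longrightarrow>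
   (\<Sum>u<2. \<Sum>v<2. std_mat g u a * std_mat g v b * z (u + v)) = At 3 (sym2_mat g) z (a + b)"
  by (drule less2_cases, drule less2_cases)
     (auto simp: suc2 At_def sum3 sum2 sym2_vals std_vals sym2_vals[unfolded One_nat_def] std_vals[unfolded One_nat_def] power2_eq_square algebra_simps)

lemma factor_delta: "delta (At 3 (sym2_mat g) z) = (g$1$1 * g$2$2 - g$1$2 * g$2$1)^2 * delta z"
  by (simp add: delta_def At_def sum3 sym2_vals sym2_vals[unfolded One_nat_def] power2_eq_square algebra_simps)

lemma PS:
  fixes B :: "nat \<Rightarrow> nat \<Rightarrow> complex" and z z' :: "nat \<Rightarrow> complex"
  assumes "w' \<in> idx 2 (2*n)"
    and f: "\<And>a b. a < 2 \<Longrightarrow> b < 2 \<Longrightarrow> (\<Sum>u<2. \<Sum>v<2. B u a * B v b * z (u + v)) = z' (a + b)"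
  shows "(\<Sum>w\<in>idx 2 (2*n). prod_list (map2 B w w') * prod_list (map z (pairsum w)))
         = prod_list (map z' (pairsum w'))"
  using assms(1)
proof (induction n arbitrary: w')
  case 0
  then have "w' = []" by (simp add: idx_def)
  then show ?case by simp
next
  case (Suc n)
  then obtain a b w'' where w: "w' = a # b # w''" "a < 2" "b < 2" "w'' \<in> idx 2 (2*n)"
    by (cases w' rule: pairsum.cases) (auto simp: idx_def)
  have e: "2 * Suc n = Suc (Suc (2 * n))" by simp
  have "(\<Sum>w\<in>idx 2 (2*Suc n). prod_list (map2 B w w') * prod_list (map z (pairsum w)))
     = (\<Sum>u<2. \<Sum>v<2. \<Sum>w\<in>idx 2 (2*n). (B u a * B v b * z (u + v)) *
           (prod_list (map2 B w w'') * prod_list (map z (pairsum w))))"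
    unfolding e sum_idx_Suc w(1) by (intro sum.cong refl) (simp add: mult_ac)
  also have "\<dots> = (\<Sum>u<2. \<Sum>v<2. (B u a * B v b * z (u + v)) *
           (\<Sum>w\<in>idx 2 (2*n). prod_list (map2 B w w'') * prod_list (map z (pairsum w))))"
    by (simp add: sum_distrib_left)
  also have "\<dots> = (\<Sum>u<2. \<Sum>v<2. B u a * B v b * z (u + v)) * prod_list (map z' (pairsum w''))"
    using Suc.IH[OF w(4)] by (simp add: sum_distrib_right)
  also have "\<dots> = prod_list (map z' (pairsum w'))"
    using f[OF w(2,3)] w(1) by simp
  finally show ?case .
qed

lemma equiv_s:
  assumes W: "W \<in> SymPow 2 (2*n)"
  shows "sM n (tensor_act 2 (2*n) (std_mat g) W) = tensor_act 3 n (sym2_mat g) (sM n W)"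
proof (rule E2_3eq[OF sM_SymPow tensor_act_SymPow[OF sM_SymPow]])
  fix z
  have "pp 3 n (sM n (tensor_act 2 (2*n) (std_mat g) W)) z
      = (\<Sum>w\<in>idx 2 (2*n). (\<Sum>w'\<in>idx 2 (2*n). prod_list (map2 (std_mat g) w w') * W w') * prod_list (map z (pairsum w)))"
    unfolding pp_sM tensor_act_alt by (intro sum.cong refl) simp
  also have "\<dots> = (\<Sum>w\<in>idx 2 (2*n). \<Sum>w'\<in>idx 2 (2*n). W w' * (prod_list (map2 (std_mat g) w w') * prod_list (map z (pairsum w))))"
    by (intro sum.cong refl, subst sum_distrib_right, intro sum.cong refl, simp add: mult_ac)
  also have "\<dots> = (\<Sum>w'\<in>idx 2 (2*n). W w' * (\<Sum>w\<in>idx 2 (2*n). prod_list (map2 (std_mat g) w w') * prod_list (map z (pairsum w))))"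
    by (subst sum.swap) (simp add: sum_distrib_left)
  also have "\<dots> = (\<Sum>w'\<in>idx 2 (2*n). W w' * prod_list (map (At 3 (sym2_mat g) z) (pairsum w')))"
    by (intro sum.cong refl arg_cong2[where f="(*)"] PS factor_s) auto
  also have "\<dots> = pp 3 n (tensor_act 3 n (sym2_mat g) (sM n W)) z"
    unfolding E1 pp_sM ..
  finally show "pp 3 n (sM n (tensor_act 2 (2*n) (std_mat g) W)) z = pp 3 n (tensor_act 3 n (sym2_mat g) (sM n W)) z" .
qed

lemma equiv_mu:
  shows "muM n (tensor_act 3 n (sym2_mat g) T) = tensor_act 2 (2*n) (std_mat g) (muM n T)"
proof (rule E2_2eq[OF muM_SymPow tensor_act_SymPow[OF muM_SymPow]])
  fix z
  have "pp 2 (2*n) (muM n (tensor_act 3 n (sym2_mat g) T)) z = pp 3 n T (At 3 (sym2_mat g) (qv z))"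
    unfolding pp_muM E1 ..
  also have "\<dots> = pp 3 n T (qv (At 2 (std_mat g) z))"
    by (rule pp_cong) (rule factor_mu)
  also have "\<dots> = pp 2 (2*n) (tensor_act 2 (2*n) (std_mat g) (muM n T)) z"
    unfolding pp_muM E1 ..
  finally show "pp 2 (2*n) (muM n (tensor_act 3 n (sym2_mat g) T)) z = pp 2 (2*n) (tensor_act 2 (2*n) (std_mat g) (muM n T)) z" .
qed

lemma equiv_r:
  assumes n: "2 \<le> n" and det: "g$1$1 * g$2$2 - g$1$2 * g$2$1 = 1"
  shows "rM n (tensor_act 3 (n-2) (sym2_mat g) T) = tensor_act 3 n (sym2_mat g) (rM n T)"
proof (rule E2_3eq[OF rM_SymPow tensor_act_SymPow[OF rM_SymPow]])
  fix z
  show "pp 3 n (rM n (tensor_act 3 (n-2) (sym2_mat g) T)) z = pp 3 n (tensor_act 3 n (sym2_mat g) (rM n T)) z"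
    unfolding pp_rM[OF n] E1 factor_delta det by simp
qed

lemma muM_sM:
  assumes W: "W \<in> SymPow 2 (2*n)"
  shows "muM n (sM n W) = W"
proof (rule E2_2eq[OF muM_SymPow W])
  fix z
  have "pp 2 (2*n) (muM n (sM n W)) z = (\<Sum>w\<in>idx 2 (2*n). W w * prod_list (map (qv z) (pairsum w)))"
    unfolding pp_muM pp_sM ..
  also have "\<dots> = pp 2 (2*n) W z"
    unfolding pp_def by (intro sum.cong refl) (simp add: prod_pairsum_qv)
  finally show "pp 2 (2*n) (muM n (sM n W)) z = pp 2 (2*n) W z" .
qed

lemma muM_rM:
  assumes n: "2 \<le> n"
  shows "muM n (rM n T) = (\<lambda>_. 0)"
proof (rule E2_2eq[OF muM_SymPow SymPow_zero])
  fix z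
  have "delta (qv z) = 0" by (simp add: delta_def qv_def)
  then show "pp 2 (2*n) (muM n (rM n T)) z = pp 2 (2*n) (\<lambda>_. 0) z"
    unfolding pp_muM pp_rM[OF n] by (simp add: pp_def)
qed

lemma rM_inj:
  assumes n: "2 \<le> n" and T: "T \<in> SymPow 3 (n-2)" and r: "rM n T = (\<lambda>_. 0)"
  shows "T = (\<lambda>_. 0)"
proof (rule E2_3[OF T])
  fix a b :: complex assume ab: "b \<noteq> a * a"
  have "delta (zz3 a b) * pp 3 (n-2) T (zz3 a b) = 0"
    using pp_rM[OF n, of T "zz3 a b"] r by (simp add: pp_def)
  moreover have "delta (zz3 a b) \<noteq> 0" using ab by (simp add: delta_def zz3_def)
  ultimately show "pp 3 (n-2) T (zz3 a b) = 0" by simp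
qed

lemma act_neg_id:
  assumes T: "T \<in> SymPow 3 n"
  shows "tensor_act 3 n (sym2_mat (- mat 1)) T = T"
proof (rule E2_3eq[OF tensor_act_SymPow[OF T] T])
  fix z
  have "pp 3 n T (At 3 (sym2_mat (- mat 1)) z) = pp 3 n T z"
  proof (rule pp_cong)
    fix i :: nat assume "i < 3"
    then show "At 3 (sym2_mat (- mat 1)) z i = z i"
      by (drule_tac less3_cases)
         (auto simp: At_def sum3 sym2_vals sym2_vals[unfolded One_nat_def] mat_def)
  qed
  then show "pp 3 n (tensor_act 3 n (sym2_mat (- mat 1)) T) z = pp 3 n T z" unfolding E1 .
qed

definition lin :: "((nat list \<Rightarrow> complex) \<Rightarrow> (nat list \<Rightarrow> complex)) \<Rightarrow> bool" where
  "lin L \<longleftrightarrow> (\<forall>c1 c2 T1 T2. L (\<lambda>xs. c1 * T1 xs + c2 * T2 xs) = (\<lambda>xs. c1 * L T1 xs + c2 * L T2 xs))"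

lemma linD: "lin L \<Longrightarrow> L (\<lambda>xs. c1 * T1 xs + c2 * T2 xs) = (\<lambda>xs. c1 * L T1 xs + c2 * L T2 xs)"
  by (simp add: lin_def)

lemma lin_zero: "lin L \<Longrightarrow> L (\<lambda>_. 0) = (\<lambda>_. 0)"
  using linD[of L 0 "\<lambda>_. 0" 0 "\<lambda>_. 0"] by simp

lemma lin_add: "lin L \<Longrightarrow> L (\<lambda>xs. T1 xs + T2 xs) = (\<lambda>xs. L T1 xs + L T2 xs)"
  using linD[of L 1 T1 1 T2] by simp

lemma lin_diff: "lin L \<Longrightarrow> L (\<lambda>xs. T1 xs - T2 xs) = (\<lambda>xs. L T1 xs - L T2 xs)"
  using linD[of L 1 T1 "-1" T2] by simp

lemma lin_scale: "lin L \<Longrightarrow> L (\<lambda>xs. c * T1 xs) = (\<lambda>xs. c * L T1 xs)"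
  using linD[of L c T1 0 "\<lambda>_. 0"] lin_zero[of L] by simp

lemma lin_sum:
  assumes L: "lin L" and B: "finite B"
  shows "L (\<lambda>xs. \<Sum>b\<in>B. c b * T b xs) = (\<lambda>xs. \<Sum>b\<in>B. c b * L (T b) xs)"
  using B
proof (induction B rule: finite_induct)
  case empty then show ?case using lin_zero[OF L] by simp
next
  case (insert b B)
  have "L (\<lambda>xs. \<Sum>b'\<in>insert b B. c b' * T b' xs) = L (\<lambda>xs. c b * T b xs + 1 * (\<Sum>b'\<in>B. c b' * T b' xs))"
    using insert(1,2) by simp
  also have "\<dots> = (\<lambda>xs. c b * L (T b) xs + 1 * L (\<lambda>xs. \<Sum>b'\<in>B. c b' * T b' xs) xs)"
    by (rule linD[OF L])
  also have "\<dots> = (\<lambda>xs. \<Sum>b'\<in>insert b B. c b' * L (T b') xs)"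
    using insert by simp
  finally show ?case .
qed

lemma lin_Symm: "Symm m n (\<lambda>xs. c1 * T1 xs + c2 * T2 xs) = (\<lambda>xs. c1 * Symm m n T1 xs + c2 * Symm m n T2 xs)"
  unfolding Symm_def by (auto simp: sum.distrib sum_distrib_left add_divide_distrib)

lemma lin_push: "push h I (\<lambda>xs. c1 * T1 xs + c2 * T2 xs) = (\<lambda>xs. c1 * push h I T1 xs + c2 * push h I T2 xs)"
  unfolding push_def by (auto simp: sum.distrib sum_distrib_left)

lemma lin_muM: "lin (muM n)"
  unfolding lin_def muM_def lin_push lin_Symm by simp

lemma lin_sM: "lin (sM n)"
  unfolding lin_def sM_def lin_push lin_Symm by simp

lemma lin_rM: "lin (rM n)"
proof -
  have "(\<lambda>ks. case ks of i # j # js \<Rightarrow> Dd i j * (c1 * T1 js + c2 * T2 js) | _ \<Rightarrow> 0)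
      = (\<lambda>ks. c1 * (case ks of i # j # js \<Rightarrow> Dd i j * T1 js | _ \<Rightarrow> 0) + c2 * (case ks of i # j # js \<Rightarrow> Dd i j * T2 js | _ \<Rightarrow> 0))"
    for c1 c2 T1 T2
  proof
    fix ks :: "nat list"
    show "(case ks of i # j # js \<Rightarrow> Dd i j * (c1 * T1 js + c2 * T2 js) | _ \<Rightarrow> 0) =
       c1 * (case ks of i # j # js \<Rightarrow> Dd i j * T1 js | _ \<Rightarrow> 0) + c2 * (case ks of i # j # js \<Rightarrow> Dd i j * T2 js | _ \<Rightarrow> 0)"
      by (cases ks rule: pairsum.cases) (auto simp: algebra_simps)
  qed
  then show ?thesis unfolding lin_def rM_def lin_Symm[symmetric] by simp
qed

lemma lin_act: "lin (tensor_act m n A)"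
  unfolding lin_def tensor_act_def by (auto simp: sum.distrib sum_distrib_left algebra_simps)

definition low :: "(nat list \<Rightarrow> complex) \<Rightarrow> bool" where
  "low R \<longleftrightarrow> (\<forall>ks. 2 \<le> count (mset ks) 1 \<longrightarrow> R ks = 0)"

definition Dec :: "nat \<Rightarrow> ((nat \<Rightarrow> complex) \<Rightarrow> complex) \<Rightarrow> bool" where
  "Dec n P \<longleftrightarrow> (\<exists>T' R. T' \<in> SymPow 3 (n-2) \<and> R \<in> SymPow 3 n \<and> low R \<and>
      (\<forall>z. P z = delta z * pp 3 (n-2) T' z + pp 3 n R z))"

lemma Dec_zero: "Dec n (\<lambda>_. 0)"
  unfolding Dec_def
  by (rule exI[of _ "\<lambda>_. 0"], rule exI[of _ "\<lambda>_. 0"]) (simp add: low_def pp_def)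

lemma Dec_add:
  assumes "Dec n P1" "Dec n P2"
  shows "Dec n (\<lambda>z. P1 z + P2 z)"
proof -
  obtain T1 R1 where 1: "T1 \<in> SymPow 3 (n-2)" "R1 \<in> SymPow 3 n" "low R1" "\<And>z. P1 z = delta z * pp 3 (n-2) T1 z + pp 3 n R1 z"
    using assms(1) unfolding Dec_def by blast
  obtain T2 R2 where 2: "T2 \<in> SymPow 3 (n-2)" "R2 \<in> SymPow 3 n" "low R2" "\<And>z. P2 z = delta z * pp 3 (n-2) T2 z + pp 3 n R2 z"
    using assms(2) unfolding Dec_def by blast
  show ?thesis unfolding Dec_def
    apply (rule exI[of _ "\<lambda>xs. T1 xs + T2 xs"], rule exI[of _ "\<lambda>xs. R1 xs + R2 xs"])
    using 1 2 by (auto simp: SymPow_add low_def pp_add algebra_simps)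
qed

lemma Dec_scale:
  assumes "Dec n P"
  shows "Dec n (\<lambda>z. c * P z)"
proof -
  obtain T1 R1 where 1: "T1 \<in> SymPow 3 (n-2)" "R1 \<in> SymPow 3 n" "low R1" "\<And>z. P z = delta z * pp 3 (n-2) T1 z + pp 3 n R1 z"
    using assms(1) unfolding Dec_def by blast
  show ?thesis unfolding Dec_def
    apply (rule exI[of _ "\<lambda>xs. c * T1 xs"], rule exI[of _ "\<lambda>xs. c * R1 xs"])
    using 1 by (auto simp: SymPow_scale low_def pp_scale algebra_simps)
qed

lemma Symm_ind_pp: "ks \<in> idx m n \<Longrightarrow> pp m n (Symm m n (\<lambda>js. if js = ks then 1 else 0)) z = prod_list (map z ks)"
proof -
  assume k: "ks \<in> idx m n"
  have "(\<Sum>js\<in>idx m n. (if js = ks then 1 else 0) * prod_list (map z js))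
      = (\<Sum>js\<in>idx m n. if js = ks then prod_list (map z js) else 0)"
    by (intro sum.cong) auto
  also have "\<dots> = prod_list (map z ks)" using k by (simp add: sum.delta)
  finally show ?thesis unfolding Symm_pp .
qed

lemma Symm_ind_low:
  assumes "count (mset ks) 1 \<le> 1"
  shows "low (Symm m n (\<lambda>js. if js = ks then 1 else 0))"
  unfolding low_def
proof (intro allI impI)
  fix js :: "nat list" assume js: "2 \<le> count (mset js) 1"
  have "(\<Sum>js'\<in>cls m n js. if js' = ks then 1 else 0) = (0::complex)"
  proof (rule sum.neutral, rule ballI)
    fix js' assume "js' \<in> cls m n js"
    then have "mset js' = mset js" by (simp add: cls_def)
    then have "js' \<noteq> ks" using assms js by auto
    then show "(if js' = ks then 1 else 0) = (0::complex)" by simp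
  qed
  then show "Symm m n (\<lambda>js. if js = ks then 1 else 0) js = 0" by (simp add: Symm_def)
qed

lemma Dec_mono: "ks \<in> idx 3 n \<Longrightarrow> Dec n (\<lambda>z. prod_list (map z ks))"
proof (induction "count (mset ks) 1" arbitrary: ks rule: less_induct)
  case less
  show ?case
  proof (cases "count (mset ks) 1 \<le> 1")
    case True
    show ?thesis unfolding Dec_def
      apply (rule exI[of _ "\<lambda>_. 0"], rule exI[of _ "Symm 3 n (\<lambda>js. if js = ks then 1 else 0)"])
      using Symm_ind_pp[OF less.prems] Symm_ind_low[OF True] by (simp add: Symm_SymPow pp_def)
  next
    case False
    then have c: "2 \<le> count (mset ks) 1" by simp
    define ks' where "ks' = remove1 1 (remove1 1 ks)"
    have m: "mset ks = mset (1 # 1 # ks')"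
    proof -
      have a: "1 \<in> set ks"
      proof (rule ccontr)
        assume "1 \<notin> set ks"
        then have "count (mset ks) 1 = 0" by simp
        with c show False by linarith
      qed
      have b: "1 \<in> set (remove1 1 ks)"
      proof (rule ccontr)
        assume "1 \<notin> set (remove1 1 ks)"
        then have "count (mset (remove1 1 ks)) 1 = 0" by (simp del: mset_remove1)
        moreover have "count (mset (remove1 1 ks)) 1 = count (mset ks) 1 - 1" by simp
        ultimately show False using c by linarith
      qed
      have r: "mset xs = add_mset x (mset (remove1 x xs))" if "x \<in> set xs" for x :: nat and xs
        using that by (simp add: insert_DiffM)
      have "mset ks = add_mset 1 (mset (remove1 1 ks))" by (rule r) fact
      also have "mset (remove1 1 ks) = add_mset 1 (mset (remove1 1 (remove1 1 ks)))" by (rule r) fact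
      finally show ?thesis unfolding ks'_def by (simp only: mset.simps)
    qed
    have lk: "length ks = n" and sk: "set ks \<subseteq> {..<3}" using less.prems by (auto simp: idx_def)
    have "length ks = length (1 # 1 # ks')" using m by (rule mset_eq_length)
    then have lks': "length ks' = n - 2" and n2: "2 \<le> n" using lk by auto
    have "set ks = set (1 # 1 # ks')" using m by (metis set_mset_mset)
    then have sks': "set ks' \<subseteq> {..<3}" using sk by auto
    have ks'_idx: "ks' \<in> idx 3 (n-2)" using lks' sks' by (simp add: idx_def)
    define ks'' where "ks'' = 0 # 2 # ks'"
    have ks''_idx: "ks'' \<in> idx 3 n" using lks' sks' n2 by (auto simp: idx_def ks''_def)
    have cnt: "count (mset ks'') 1 < count (mset ks) 1" unfolding ks''_def m by simp
    obtain T2 R where 2: "T2 \<in> SymPow 3 (n-2)" "R \<in> SymPow 3 n" "low R"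
       "\<And>z. prod_list (map z ks'') = delta z * pp 3 (n-2) T2 z + pp 3 n R z"
      using less.hyps[OF cnt ks''_idx] unfolding Dec_def by blast
    have pk: "prod_list (map z ks) = z 1 * z 1 * prod_list (map z ks')" for z :: "nat \<Rightarrow> complex"
      using prod_map_mset[OF m, of z] by simp
    show ?thesis unfolding Dec_def
    proof (rule exI[of _ "\<lambda>xs. Symm 3 (n-2) (\<lambda>js. if js = ks' then 1 else 0) xs + T2 xs"], rule exI[of _ R], intro conjI allI)
      show "(\<lambda>xs. Symm 3 (n-2) (\<lambda>js. if js = ks' then 1 else 0) xs + T2 xs) \<in> SymPow 3 (n-2)"
        by (rule SymPow_add[OF Symm_SymPow 2(1)])
      show "R \<in> SymPow 3 n" "low R" using 2 by auto
      fix z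
      have "prod_list (map z ks) = delta z * prod_list (map z ks') + prod_list (map z ks'')"
        unfolding pk ks''_def delta_def by (simp add: algebra_simps)
      also have "\<dots> = delta z * pp 3 (n-2) (\<lambda>xs. Symm 3 (n-2) (\<lambda>js. if js = ks' then 1 else 0) xs + T2 xs) z + pp 3 n R z"
        unfolding pp_add Symm_ind_pp[OF ks'_idx] 2(4) by (simp add: algebra_simps)
      finally show "prod_list (map z ks) = delta z * pp 3 (n-2) (\<lambda>xs. Symm 3 (n-2) (\<lambda>js. if js = ks' then 1 else 0) xs + T2 xs) z + pp 3 n R z" .
    qed
  qed
qed

lemma Dec_pp: "Dec n (pp 3 n T)"
proof -
  have "S \<subseteq> idx 3 n \<Longrightarrow> Dec n (\<lambda>z. \<Sum>ks\<in>S. T ks * prod_list (map z ks))" for S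
  proof (induction S rule: infinite_finite_induct)
    case (infinite A) then show ?case using finite_subset[OF _ finite_idx] by blast
  next
    case empty then show ?case using Dec_zero by simp
  next
    case (insert x F)
    have "Dec n (\<lambda>z. T x * prod_list (map z x) + (\<Sum>ks\<in>F. T ks * prod_list (map z ks)))"
      using insert by (intro Dec_add Dec_scale Dec_mono) auto
    then show ?case using insert(1,2) by simp
  qed
  then show ?thesis unfolding pp_def[abs_def] by (metis order_refl)
qed

lemma qv_zz2: "qv (zz2 a) = zz3 a (a * a)"
  by (auto simp: qv_def zz2_def zz3_def)

lemma count12_le: "ks \<in> idx 3 n \<Longrightarrow> count (mset ks) 1 + count (mset ks) 2 \<le> n"
  using length_counts3[of ks] by (auto simp: idx_def)

lemma par_lemma: "(a1::nat) \<le> 1 \<Longrightarrow> b1 \<le> 1 \<Longrightarrow> a1 + 2*a2 = b1 + 2*b2 \<Longrightarrow> a1 = b1 \<and> a2 = b2"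
  by presburger

lemma low_inj:
  assumes R: "R \<in> SymPow 3 n" and lowR: "low R" and mu: "muM n R = (\<lambda>_. 0)"
  shows "R = (\<lambda>_. 0)"
proof -
  let ?e = "\<lambda>ks. count (mset ks) 1 + 2 * count (mset ks) 2"
  define C where "C e = (\<Sum>ks\<in>{ks\<in>idx 3 n. ?e ks = e}. R ks)" for e
  have pp_eq: "pp 3 n R (zz3 a (a*a)) = (\<Sum>e\<le>2*n. C e * a^e)" for a
  proof -
    have "pp 3 n R (zz3 a (a*a)) = (\<Sum>ks\<in>idx 3 n. R ks * a ^ ?e ks)"
      unfolding pp_def
    proof (intro sum.cong refl)
      fix ks assume "ks \<in> idx 3 n"
      then have "set ks \<subseteq> {..<3}" by (auto simp: idx_def)
      then show "R ks * prod_list (map (zz3 a (a*a)) ks) = R ks * a ^ ?e ks"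
        by (simp add: prod_zz3 power_add power_mult power_mult_distrib[symmetric] power2_eq_square[symmetric])
    qed
    also have "\<dots> = (\<Sum>e\<in>{..2*n}. \<Sum>ks\<in>{ks\<in>idx 3 n. ?e ks = e}. R ks * a ^ ?e ks)"
      by (rule sum.group[symmetric]) (auto dest: count12_le)
    also have "\<dots> = (\<Sum>e\<le>2*n. C e * a^e)"
      unfolding C_def sum_distrib_right by (intro sum.cong refl) auto
    finally show ?thesis .
  qed
  have z: "pp 3 n R (zz3 a (a*a)) = 0" for a
    using pp_muM[of n R "zz2 a"] mu by (simp add: qv_zz2 pp_def)
  have C0: "C e = 0" if "e \<le> 2*n" for e
    using polyfun_eq_0[of C "2*n"] z pp_eq that by auto
  show ?thesis
  proof
    fix ks
    show "R ks = 0"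
    proof (rule ccontr)
      assume nz: "R ks \<noteq> 0"
      then have ks: "ks \<in> idx 3 n" using SymPow_out[OF R] by blast
      have c1: "count (mset ks) 1 \<le> 1" using nz lowR unfolding low_def by force
      let ?S = "{ks'\<in>idx 3 n. ?e ks' = ?e ks}"
      let ?S' = "{ks'\<in>idx 3 n. mset ks' = mset ks}"
      have "sum R ?S = sum R ?S'"
      proof (rule sum.mono_neutral_right)
        show "finite ?S" by simp
        show "?S' \<subseteq> ?S" by auto
        show "\<forall>x\<in>?S - ?S'. R x = 0"
        proof
          fix x assume x: "x \<in> ?S - ?S'"
          show "R x = 0"
          proof (rule ccontr)
            assume "R x \<noteq> 0"
            then have "count (mset x) 1 \<le> 1" using lowR unfolding low_def by force
            then have "count (mset x) 1 = count (mset ks) 1 \<and> count (mset x) 2 = count (mset ks) 2"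
              using c1 x par_lemma by blast
            then have "mset x = mset ks" using x ks by (intro mset_eq_counts3[of _ n]) auto
            then show False using x by auto
          qed
        qed
      qed
      moreover have "sum R ?S = 0" using C0[of "?e ks"] count12_le[OF ks] by (simp add: C_def)
      ultimately have "sum R ?S' = 0" by simp
      then have "R ks = 0"
        by (intro fiber_const_sum[of ?S' ks R]) (auto simp: ks intro: SymPow_eq[OF R])
      with nz show False by simp
    qed
  qed
qed

lemma kernel_big:
  assumes n: "2 \<le> n" and T: "T \<in> SymPow 3 n" and mu: "muM n T = (\<lambda>_. 0)"
  shows "\<exists>T'\<in>SymPow 3 (n-2). T = rM n T'"
proof -
  obtain T' R where d: "T' \<in> SymPow 3 (n-2)" "R \<in> SymPow 3 n" "low R"
      "\<And>z. pp 3 n T z = delta z * pp 3 (n-2) T' z + pp 3 n R z"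
    using Dec_pp[of n T] unfolding Dec_def by blast
  have TR: "T = (\<lambda>xs. rM n T' xs + R xs)"
    by (rule E2_3eq[OF T SymPow_add[OF rM_SymPow d(2)]]) (simp add: pp_add pp_rM[OF n] d(4))
  have "muM n R = (\<lambda>_. 0)"
  proof -
    have "(\<lambda>_. 0) = muM n (\<lambda>xs. rM n T' xs + R xs)" using mu TR by simp
    also have "\<dots> = (\<lambda>xs. muM n (rM n T') xs + muM n R xs)" by (rule lin_add[OF lin_muM])
    also have "\<dots> = muM n R" using muM_rM[OF n] by simp
    finally show ?thesis by simp
  qed
  then have "R = (\<lambda>_. 0)" using low_inj d(2,3) by blast
  then have "T = rM n T'" using TR by simp
  then show ?thesis using d(1) by blast
qed

lemma kernel_small:
  assumes n: "n < 2" and T: "T \<in> SymPow 3 n" and mu: "muM n T = (\<lambda>_. 0)"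
  shows "T = (\<lambda>_. 0)"
proof (rule low_inj[OF T _ mu])
  show "low T" unfolding low_def
  proof (intro allI impI)
    fix ks :: "nat list" assume c: "2 \<le> count (mset ks) 1"
    show "T ks = 0"
    proof (cases "ks \<in> idx 3 n")
      case True then show ?thesis using count_le_n[OF True, of 1] c n by simp
    next
      case False then show ?thesis using SymPow_out[OF T] by blast
    qed
  qed
qed

context vector_space
begin

lemma dim_split:
  assumes H1: "subspace H1" and H2: "subspace H2"
    and F1: "finite F1" "H1 \<subseteq> span F1" and F2: "finite F2" "H2 \<subseteq> span F2"
    and L1: "Vector_Spaces.linear scale scale L1" and L2: "Vector_Spaces.linear scale scale L2" and M: "Vector_Spaces.linear scale scale M"
    and im1: "L1 ` H1 \<subseteq> H" and im2: "L2 ` H2 \<subseteq> H"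
    and cover: "\<And>h. h \<in> H \<Longrightarrow> \<exists>x\<in>H1. \<exists>y\<in>H2. h = L1 x + L2 y"
    and ML1: "\<And>x. x \<in> H1 \<Longrightarrow> M (L1 x) = x" and ML2: "\<And>y. y \<in> H2 \<Longrightarrow> M (L2 y) = 0"
    and inj2: "\<And>y. y \<in> H2 \<Longrightarrow> L2 y = 0 \<Longrightarrow> y = 0"
  shows "dim H = dim H1 + dim H2"
proof -
  interpret l1: Vector_Spaces.linear scale scale L1 by (rule L1)
  interpret l2: Vector_Spaces.linear scale scale L2 by (rule L2)
  interpret lm: Vector_Spaces.linear scale scale M by (rule M)
  obtain B1 where B1: "B1 \<subseteq> H1" "independent B1" "H1 \<subseteq> span B1" "card B1 = dim H1"
    using basis_exists by blast
  obtain B2 where B2: "B2 \<subseteq> H2" "independent B2" "H2 \<subseteq> span B2" "card B2 = dim H2"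
    using basis_exists by blast
  have fB1: "finite B1" using independent_span_bound[OF F1(1) B1(2)] B1(1) F1(2) by blast
  have fB2: "finite B2" using independent_span_bound[OF F2(1) B2(2)] B2(1) F2(2) by blast
  have inj1: "inj_on L1 B1"
  proof (rule inj_onI)
    fix x x' assume x: "x \<in> B1" "x' \<in> B1" "L1 x = L1 x'"
    have h: "x \<in> H1" "x' \<in> H1" using B1(1) x by blast+
    have "x = M (L1 x)" using ML1[OF h(1)] by simp
    also have "\<dots> = M (L1 x')" using x(3) by simp
    also have "\<dots> = x'" using ML1[OF h(2)] .
    finally show "x = x'" .
  qed
  have injB2: "inj_on L2 B2"
  proof (rule inj_onI)
    fix x x' assume x: "x \<in> B2" "x' \<in> B2" "L2 x = L2 x'"
    then have "L2 (x - x') = 0" by (simp add: l2.diff)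
    moreover have "x - x' \<in> H2" using x B2(1) H2 by (auto intro: subspace_diff)
    ultimately have "x - x' = 0" using inj2 by blast
    then show "x = x'" by simp
  qed
  have disj: "L1 ` B1 \<inter> L2 ` B2 = {}"
  proof (rule ccontr)
    assume "L1 ` B1 \<inter> L2 ` B2 \<noteq> {}"
    then obtain x y where xy: "x \<in> B1" "y \<in> B2" "L1 x = L2 y" by blast
    then have "x = 0" using ML1[of x] ML2[of y] B1(1) B2(1) by auto
    then have "dependent B1" using xy(1) dependent_zero by blast
    then show False using B1(2) by blast
  qed
  define C where "C = L1 ` B1 \<union> L2 ` B2"
  have fC: "finite C" using fB1 fB2 by (simp add: C_def)
  have cardC: "card C = card B1 + card B2"
    unfolding C_def using card_Un_disjoint[OF _ _ disj] fB1 fB2 card_image[OF inj1] card_image[OF injB2] by simp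
  have CH: "C \<subseteq> H" using im1 im2 B1(1) B2(1) unfolding C_def by blast
  have HC: "H \<subseteq> span C"
  proof
    fix h assume "h \<in> H"
    then obtain x y where xy: "x \<in> H1" "y \<in> H2" "h = L1 x + L2 y" using cover by blast
    have "L1 x \<in> span (L1 ` B1)" using xy(1) B1(3) l1.span_image by blast
    then have 1: "L1 x \<in> span C" using span_mono[of "L1 ` B1" C] by (auto simp: C_def)
    have "L2 y \<in> span (L2 ` B2)" using xy(2) B2(3) l2.span_image by blast
    then have 2: "L2 y \<in> span C" using span_mono[of "L2 ` B2" C] by (auto simp: C_def)
    show "h \<in> span C" using span_add[OF 1 2] xy(3) by simp
  qed
  have indC: "independent C"
  proof (rule independent_if_scalars_zero[OF fC])
    fix f x assume sum0: "(\<Sum>x\<in>C. scale (f x) x) = 0" and x: "x \<in> C"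
    define X where "X = (\<Sum>b\<in>B1. scale (f (L1 b)) b)"
    define Y where "Y = (\<Sum>b\<in>B2. scale (f (L2 b)) b)"
    have "(\<Sum>x\<in>C. scale (f x) x) = (\<Sum>x\<in>L1 ` B1. scale (f x) x) + (\<Sum>x\<in>L2 ` B2. scale (f x) x)"
      unfolding C_def using fB1 fB2 disj by (simp add: sum.union_disjoint)
    also have "\<dots> = L1 X + L2 Y"
      unfolding X_def Y_def l1.sum l2.sum l1.scale l2.scale sum.reindex[OF inj1] sum.reindex[OF injB2] comp_def ..
    finally have e: "L1 X + L2 Y = 0" using sum0 by simp
    have XH: "X \<in> H1" unfolding X_def using B1(1) H1 by (auto intro!: subspace_sum subspace_scale)
    have YH: "Y \<in> H2" unfolding Y_def using B2(1) H2 by (auto intro!: subspace_sum subspace_scale)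
    have "M (L1 X + L2 Y) = X" using ML1[OF XH] ML2[OF YH] by (simp add: lm.add)
    then have X0: "X = 0" using e by simp
    have f1: "\<forall>b\<in>B1. f (L1 b) = 0"
    proof
      fix b assume "b \<in> B1"
      then show "f (L1 b) = 0"
        using independentD[OF B1(2) fB1 order_refl, of "\<lambda>b. f (L1 b)" b] X0 unfolding X_def by blast
    qed
    have "L2 Y = 0" using e X0 by simp
    then have "Y = 0" using inj2 YH by blast
    then have f2: "\<forall>b\<in>B2. f (L2 b) = 0"
      using independentD[OF B2(2) fB2 order_refl, of "\<lambda>b. f (L2 b)"] unfolding Y_def by blast
    show "f x = 0" using x f1 f2 by (auto simp: C_def)
  qed
  have "dim H = card C" by (rule dim_unique[OF CH HC indC refl])
  then show ?thesis using cardC B1(4) B2(4) by simp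
qed

end

lemma HomG_D1: "f \<in> HomG G \<rho> m \<sigma> n \<Longrightarrow> f a \<in> SymPow m n"
  by (simp add: HomG_def)

lemma HomG_D2: "f \<in> HomG G \<rho> m \<sigma> n \<Longrightarrow> g \<in> G \<Longrightarrow>
   (\<lambda>xs. \<Sum>b\<in>UNIV. (\<rho> g) $ b $ a * f b xs) = tensor_act m n (\<sigma> g) (f a)"
  by (simp add: HomG_def)

lemma HomG_I:
  assumes "\<And>a. f a \<in> SymPow m n"
    "\<And>g a. g \<in> G \<Longrightarrow> (\<lambda>xs. \<Sum>b\<in>UNIV. (\<rho> g) $ b $ a * f b xs) = tensor_act m n (\<sigma> g) (f a)"
  shows "f \<in> HomG G \<rho> m \<sigma> n"
  using assms by (simp add: HomG_def)

lemma transport: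
  fixes f :: "'n::finite \<Rightarrow> nat list \<Rightarrow> complex"
  assumes L: "lin L" and SP: "\<And>T. T \<in> SymPow m n \<Longrightarrow> L T \<in> SymPow m' n'"
    and EQ: "\<And>g T. g \<in> G \<Longrightarrow> T \<in> SymPow m n \<Longrightarrow> L (tensor_act m n (\<sigma> g) T) = tensor_act m' n' (\<tau> g) (L T)"
    and f: "f \<in> HomG G \<rho> m \<sigma> n"
  shows "(\<lambda>a. L (f a)) \<in> HomG G \<rho> m' \<tau> n'"
proof (rule HomG_I)
  fix a show "L (f a) \<in> SymPow m' n'" by (rule SP[OF HomG_D1[OF f]])
next
  fix g a assume g: "g \<in> G"
  have "(\<lambda>xs. \<Sum>b\<in>UNIV. (\<rho> g) $ b $ a * L (f b) xs) = L (\<lambda>xs. \<Sum>b\<in>UNIV. (\<rho> g) $ b $ a * f b xs)"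
    by (rule lin_sum[OF L finite_class.finite_UNIV, symmetric])
  also have "\<dots> = L (tensor_act m n (\<sigma> g) (f a))" using HomG_D2[OF f g] by simp
  also have "\<dots> = tensor_act m' n' (\<tau> g) (L (f a))" by (rule EQ[OF g HomG_D1[OF f]])
  finally show "(\<lambda>xs. \<Sum>b\<in>UNIV. (\<rho> g) $ b $ a * L (f b) xs) = tensor_act m' n' (\<tau> g) (L (f a))" .
qed

lemma pullback:
  fixes F y :: "'n::finite \<Rightarrow> nat list \<Rightarrow> complex"
  assumes L: "lin L" and inj: "\<And>T1 T2. T1 \<in> SymPow m' n' \<Longrightarrow> T2 \<in> SymPow m' n' \<Longrightarrow> L T1 = L T2 \<Longrightarrow> T1 = T2"
    and EQ: "\<And>g T. g \<in> G \<Longrightarrow> T \<in> SymPow m' n' \<Longrightarrow> L (tensor_act m' n' (\<tau> g) T) = tensor_act m n (\<sigma> g) (L T)"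
    and F: "F \<in> HomG G \<rho> m \<sigma> n" and y: "\<And>a. y a \<in> SymPow m' n'" and Fy: "\<And>a. F a = L (y a)"
  shows "y \<in> HomG G \<rho> m' \<tau> n'"
proof (rule HomG_I)
  fix a show "y a \<in> SymPow m' n'" by (rule y)
next
  fix g a assume g: "g \<in> G"
  show "(\<lambda>xs. \<Sum>b\<in>UNIV. (\<rho> g) $ b $ a * y b xs) = tensor_act m' n' (\<tau> g) (y a)"
  proof (rule inj)
    show "(\<lambda>xs. \<Sum>b\<in>UNIV. (\<rho> g) $ b $ a * y b xs) \<in> SymPow m' n'"
      by (rule SymPow_sum) (auto simp: y)
    show "tensor_act m' n' (\<tau> g) (y a) \<in> SymPow m' n'" by (rule tensor_act_SymPow[OF y])
    have "L (\<lambda>xs. \<Sum>b\<in>UNIV. (\<rho> g) $ b $ a * y b xs) = (\<lambda>xs. \<Sum>b\<in>UNIV. (\<rho> g) $ b $ a * L (y b) xs)"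
      by (rule lin_sum[OF L finite_class.finite_UNIV])
    also have "\<dots> = (\<lambda>xs. \<Sum>b\<in>UNIV. (\<rho> g) $ b $ a * F b xs)" by (simp add: Fy)
    also have "\<dots> = tensor_act m n (\<sigma> g) (F a)" by (rule HomG_D2[OF F g])
    also have "\<dots> = L (tensor_act m' n' (\<tau> g) (y a))" by (simp add: Fy EQ[OF g y])
    finally show "L (\<lambda>xs. \<Sum>b\<in>UNIV. (\<rho> g) $ b $ a * y b xs) = L (tensor_act m' n' (\<tau> g) (y a))" .
  qed
qed

lemma HomG_zero: "(0 :: 'n::finite \<Rightarrow> nat list \<Rightarrow> complex) \<in> HomG G \<rho> m \<sigma> n"
proof (rule HomG_I)
  fix a :: 'n show "(0 :: 'n::finite \<Rightarrow> nat list \<Rightarrow> complex) a \<in> SymPow m n"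
    using SymPow_zero by (simp add: zero_fun_def)
next
  fix g a
  show "(\<lambda>xs. \<Sum>b\<in>UNIV. (\<rho> g) $ b $ a * (0 :: 'n::finite \<Rightarrow> nat list \<Rightarrow> complex) b xs) =
        tensor_act m n (\<sigma> g) ((0 :: 'n::finite \<Rightarrow> nat list \<Rightarrow> complex) a)"
    using lin_zero[OF lin_act, of m n "\<sigma> g"] by (simp add: zero_fun_def)
qed

lemma HomG_add:
  fixes f h :: "'n::finite \<Rightarrow> nat list \<Rightarrow> complex"
  assumes f: "f \<in> HomG G \<rho> m \<sigma> n" and h: "h \<in> HomG G \<rho> m \<sigma> n"
  shows "f + h \<in> HomG G \<rho> m \<sigma> n"
proof (rule HomG_I)
  fix a show "(f + h) a \<in> SymPow m n"
    using SymPow_add[OF HomG_D1[OF f] HomG_D1[OF h]] by (simp add: plus_fun_def)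
next
  fix g a assume g: "g \<in> G"
  have "(\<lambda>xs. \<Sum>b\<in>UNIV. (\<rho> g) $ b $ a * (f + h) b xs)
     = (\<lambda>xs. (\<Sum>b\<in>UNIV. (\<rho> g) $ b $ a * f b xs) + (\<Sum>b\<in>UNIV. (\<rho> g) $ b $ a * h b xs))"
    by (simp add: plus_fun_def algebra_simps sum.distrib)
  also have "\<dots> = (\<lambda>xs. tensor_act m n (\<sigma> g) (f a) xs + tensor_act m n (\<sigma> g) (h a) xs)"
    using HomG_D2[OF f g, of a] HomG_D2[OF h g, of a] by (metis (no_types))
  also have "\<dots> = tensor_act m n (\<sigma> g) (\<lambda>xs. f a xs + h a xs)"
    by (rule lin_add[OF lin_act, symmetric])
  also have "\<dots> = tensor_act m n (\<sigma> g) ((f + h) a)" by (simp add: plus_fun_def)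
  finally show "(\<lambda>xs. \<Sum>b\<in>UNIV. (\<rho> g) $ b $ a * (f + h) b xs) = tensor_act m n (\<sigma> g) ((f + h) a)" .
qed

lemma HomG_scale:
  fixes f :: "'n::finite \<Rightarrow> nat list \<Rightarrow> complex"
  assumes f: "f \<in> HomG G \<rho> m \<sigma> n"
  shows "fscale c f \<in> HomG G \<rho> m \<sigma> n"
proof (rule HomG_I)
  fix a show "fscale c f a \<in> SymPow m n"
    using SymPow_scale[OF HomG_D1[OF f]] by (simp add: fscale_def)
next
  fix g a assume g: "g \<in> G"
  have "(\<lambda>xs. \<Sum>b\<in>UNIV. (\<rho> g) $ b $ a * fscale c f b xs)
     = (\<lambda>xs. c * (\<Sum>b\<in>UNIV. (\<rho> g) $ b $ a * f b xs))"
    by (simp add: fscale_def algebra_simps sum_distrib_left)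
  also have "\<dots> = (\<lambda>xs. c * tensor_act m n (\<sigma> g) (f a) xs)"
    using HomG_D2[OF f g, of a] by (metis (no_types))
  also have "\<dots> = tensor_act m n (\<sigma> g) (\<lambda>xs. c * f a xs)"
    by (rule lin_scale[OF lin_act, symmetric])
  also have "\<dots> = tensor_act m n (\<sigma> g) (fscale c f a)" by (simp add: fscale_def)
  finally show "(\<lambda>xs. \<Sum>b\<in>UNIV. (\<rho> g) $ b $ a * fscale c f b xs) = tensor_act m n (\<sigma> g) (fscale c f a)" .
qed

lemma HomG_subspace: "module.subspace fscale (HomG G \<rho> m \<sigma> n)"
proof -
  interpret fs: vector_space fscale by (rule fscale_vector_space)
  show ?thesis unfolding fs.subspace_def using HomG_zero HomG_add HomG_scale by blast
qed

lemma sum_fun_app: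
  fixes h :: "'b \<Rightarrow> 'a \<Rightarrow> nat list \<Rightarrow> complex"
  shows "(\<Sum>p\<in>P. h p) a xs = (\<Sum>p\<in>P. h p a xs)"
  by (induction P rule: infinite_finite_induct) auto

definition Eb :: "'n \<times> nat list \<Rightarrow> 'n \<Rightarrow> nat list \<Rightarrow> complex" where
  "Eb p = (\<lambda>a' xs. if a' = fst p \<and> xs = snd p then 1 else 0)"

lemma HomG_span:
  fixes G \<rho> \<sigma>
  shows "HomG G (\<rho> :: complex^2^2 \<Rightarrow> complex^'n::finite^'n) m \<sigma> n \<subseteq> module.span fscale (Eb ` (UNIV \<times> idx m n))"
proof
  interpret fs: vector_space fscale by (rule fscale_vector_space)
  fix f assume f: "f \<in> HomG G \<rho> m \<sigma> n"
  have e: "f = (\<Sum>p\<in>UNIV \<times> idx m n. fscale (f (fst p) (snd p)) (Eb p))"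
  proof (intro ext)
    fix a xs
    have "(\<Sum>p\<in>UNIV \<times> idx m n. fscale (f (fst p) (snd p)) (Eb p)) a xs
        = (\<Sum>p\<in>UNIV \<times> idx m n. fscale (f (fst p) (snd p)) (Eb p) a xs)"
      by (rule sum_fun_app)
    also have "\<dots> = (\<Sum>p\<in>UNIV \<times> idx m n. if p = (a, xs) then f a xs else 0)"
      by (intro sum.cong refl) (auto simp: fscale_def Eb_def)
    also have "\<dots> = f a xs"
      using SymPow_out[OF HomG_D1[OF f, of a], of xs] by (simp add: sum.delta)
    finally show "f a xs = (\<Sum>p\<in>UNIV \<times> idx m n. fscale (f (fst p) (snd p)) (Eb p)) a xs" by simp
  qed
  show "f \<in> fs.span (Eb ` (UNIV \<times> idx m n))"
    by (subst e, intro fs.span_sum fs.span_scale fs.span_base) auto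
qed

definition Lf :: "((nat list \<Rightarrow> complex) \<Rightarrow> (nat list \<Rightarrow> complex)) \<Rightarrow> ('n \<Rightarrow> nat list \<Rightarrow> complex) \<Rightarrow> 'n \<Rightarrow> nat list \<Rightarrow> complex" where
  "Lf L f = (\<lambda>a. L (f a))"

lemma lin_Lf: "lin L \<Longrightarrow> Vector_Spaces.linear fscale fscale (Lf L)"
  unfolding Vector_Spaces.linear_iff
  using fscale_vector_space
  by (auto simp: Lf_def fscale_def plus_fun_def lin_add lin_scale)

lemma Lf_apply: "Lf L f a = L (f a)" by (simp add: Lf_def)

lemma dim_rec:
  fixes \<rho> :: "complex^2^2 \<Rightarrow> complex^'n::finite^'n"
  assumes det: "\<And>g. g \<in> G \<Longrightarrow> g$1$1 * g$2$2 - g$1$2 * g$2$1 = 1"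
  shows "vector_space.dim fscale (HomG G \<rho> 3 sym2_mat n) =
         vector_space.dim fscale (HomG G \<rho> 2 std_mat (2*n)) +
         (if 2 \<le> n then vector_space.dim fscale (HomG G \<rho> 3 sym2_mat (n-2)) else 0)"
proof -
  interpret fs: vector_space "fscale :: complex \<Rightarrow> ('n \<Rightarrow> nat list \<Rightarrow> complex) \<Rightarrow> _"
    by (rule fscale_vector_space)
  let ?H = "HomG G \<rho> 3 sym2_mat n"
  let ?H1 = "HomG G \<rho> 2 std_mat (2*n)"
  have sub1: "fs.subspace ?H1" by (rule HomG_subspace)
  have fin1: "finite (Eb ` (UNIV \<times> idx 2 (2*n)) :: ('n \<Rightarrow> nat list \<Rightarrow> complex) set)" "?H1 \<subseteq> fs.span (Eb ` (UNIV \<times> idx 2 (2*n)))"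
    by simp (rule HomG_span)
  have im1: "Lf (sM n) ` ?H1 \<subseteq> ?H"
  proof
    fix h assume "h \<in> Lf (sM n) ` ?H1"
    then obtain x where x: "x \<in> ?H1" "h = Lf (sM n) x" by blast
    have "(\<lambda>a. sM n (x a)) \<in> ?H"
      by (rule transport[OF lin_sM sM_SymPow equiv_s x(1)])
    then show "h \<in> ?H" using x(2) by (simp add: Lf_def)
  qed
  have muH: "Lf (muM n) h \<in> ?H1" if "h \<in> ?H" for h
  proof -
    have "(\<lambda>a. muM n (h a)) \<in> ?H1"
      by (rule transport[OF lin_muM muM_SymPow equiv_mu that])
    then show ?thesis by (simp add: Lf_def)
  qed
  have ML1: "Lf (muM n) (Lf (sM n) x) = x" if "x \<in> ?H1" for x
    using muM_sM[OF HomG_D1[OF that]] by (simp add: Lf_def)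
  have rem: "\<And>a. muM n ((h - Lf (sM n) (Lf (muM n) h)) a) = (\<lambda>_. 0)"
    and remH: "h - Lf (sM n) (Lf (muM n) h) \<in> ?H" if "h \<in> ?H" for h
  proof -
    fix a
    have "(h - Lf (sM n) (Lf (muM n) h)) a = (\<lambda>xs. h a xs - sM n (muM n (h a)) xs)"
      by (simp add: Lf_def fun_diff_def)
    then show "muM n ((h - Lf (sM n) (Lf (muM n) h)) a) = (\<lambda>_. 0)"
      using lin_diff[OF lin_muM, of n "h a" "sM n (muM n (h a))"] muM_sM[OF muM_SymPow, of n "h a"]
      by simp
  next
    have "Lf (sM n) (Lf (muM n) h) \<in> ?H" using im1 muH[OF that] by blast
    then show "h - Lf (sM n) (Lf (muM n) h) \<in> ?H"
      using fs.subspace_diff[OF HomG_subspace that] by blast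
  qed
  show ?thesis
  proof (cases "2 \<le> n")
    case True
    let ?H2 = "HomG G \<rho> 3 sym2_mat (n-2)"
    have sub2: "fs.subspace ?H2" by (rule HomG_subspace)
    have fin2: "finite (Eb ` (UNIV \<times> idx 3 (n-2)) :: ('n \<Rightarrow> nat list \<Rightarrow> complex) set)" "?H2 \<subseteq> fs.span (Eb ` (UNIV \<times> idx 3 (n-2)))"
      by simp (rule HomG_span)
    have eqr: "rM n (tensor_act 3 (n-2) (sym2_mat g) T) = tensor_act 3 n (sym2_mat g) (rM n T)"
      if "g \<in> G" "T \<in> SymPow 3 (n-2)" for g T
      by (rule equiv_r[OF True det[OF that(1)]])
    have im2: "Lf (rM n) ` ?H2 \<subseteq> ?H"
    proof
      fix h assume "h \<in> Lf (rM n) ` ?H2"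
      then obtain y where y: "y \<in> ?H2" "h = Lf (rM n) y" by blast
      have "(\<lambda>a. rM n (y a)) \<in> ?H"
        by (rule transport[OF lin_rM rM_SymPow eqr y(1)])
      then show "h \<in> ?H" using y(2) by (simp add: Lf_def)
    qed
    have rinj: "T1 = T2" if "T1 \<in> SymPow 3 (n-2)" "T2 \<in> SymPow 3 (n-2)" "rM n T1 = rM n T2" for T1 T2
    proof -
      have "rM n (\<lambda>xs. T1 xs - T2 xs) = (\<lambda>xs. rM n T1 xs - rM n T2 xs)" by (rule lin_diff[OF lin_rM])
      then have "rM n (\<lambda>xs. T1 xs - T2 xs) = (\<lambda>_. 0)" using that(3) by simp
      then have "(\<lambda>xs. T1 xs - T2 xs) = (\<lambda>_. 0)" by (rule rM_inj[OF True SymPow_diff[OF that(1,2)]])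
      then show ?thesis by (metis (no_types) eq_iff_diff_eq_0 ext)
    qed
    have cover: "\<exists>x\<in>?H1. \<exists>y\<in>?H2. h = Lf (sM n) x + Lf (rM n) y" if h: "h \<in> ?H" for h
    proof -
      define F where "F = h - Lf (sM n) (Lf (muM n) h)"
      have FH: "F \<in> ?H" unfolding F_def by (rule remH[OF h])
      have ex: "\<exists>T'\<in>SymPow 3 (n-2). F a = rM n T'" for a
        by (rule kernel_big[OF True HomG_D1[OF FH]]) (use rem[OF h] in \<open>simp add: F_def\<close>)
      define y where "y a = (SOME T'. T' \<in> SymPow 3 (n-2) \<and> F a = rM n T')" for a
      have y: "y a \<in> SymPow 3 (n-2) \<and> F a = rM n (y a)" for a
        unfolding y_def using someI_ex[OF ex[of a, unfolded Bex_def]] .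
      have yH: "y \<in> ?H2"
        by (rule pullback[OF lin_rM rinj eqr FH]) (use y in auto)
      have "h = Lf (sM n) (Lf (muM n) h) + F" unfolding F_def by simp
      also have "F = Lf (rM n) y" using y by (auto simp: Lf_def)
      finally show ?thesis using muH[OF h] yH by blast
    qed
    have ML2: "Lf (muM n) (Lf (rM n) y) = 0" for y :: "'n \<Rightarrow> nat list \<Rightarrow> complex"
      using muM_rM[OF True] by (simp add: Lf_def zero_fun_def)
    have inj2: "y = 0" if "y \<in> ?H2" "Lf (rM n) y = 0" for y
    proof
      fix a
      have "Lf (rM n) y a = 0 a" using fun_cong[OF that(2), of a] .
      then have "rM n (y a) = (\<lambda>_. 0)" by (simp add: Lf_def zero_fun_def)
      then have "rM n (y a) = rM n (\<lambda>_. 0)" using lin_zero[OF lin_rM] by simp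
      then have "y a = (\<lambda>_. 0)" by (rule rinj[OF HomG_D1[OF that(1)] SymPow_zero])
      then show "y a = 0 a" by (simp add: zero_fun_def)
    qed
    have "fs.dim ?H = fs.dim ?H1 + fs.dim ?H2"
      by (rule fs.dim_split[OF sub1 sub2 fin1 fin2 lin_Lf[OF lin_sM] lin_Lf[OF lin_rM] lin_Lf[OF lin_muM]
            im1 im2 cover ML1 ML2 inj2])
    then show ?thesis using True by simp
  next
    case False
    then have n: "n < 2" by simp
    have sub2: "fs.subspace {0}" by (simp add: fs.subspace_def fscale_def zero_fun_def)
    have fin2: "finite ({} :: ('n \<Rightarrow> nat list \<Rightarrow> complex) set)" "{0} \<subseteq> fs.span {}"
      by (simp_all add: fs.span_empty)
    have linid: "lin (\<lambda>T. T)" by (simp add: lin_def)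
    have im2: "Lf (\<lambda>T. T) ` {0} \<subseteq> ?H" using HomG_zero by (simp add: Lf_def zero_fun_def)
    have cover: "\<exists>x\<in>?H1. \<exists>y\<in>{0}. h = Lf (sM n) x + Lf (\<lambda>T. T) y" if h: "h \<in> ?H" for h
    proof -
      define F where "F = h - Lf (sM n) (Lf (muM n) h)"
      have FH: "F \<in> ?H" unfolding F_def by (rule remH[OF h])
      have "F a = (\<lambda>_. 0)" for a
        by (rule kernel_small[OF n HomG_D1[OF FH]]) (use rem[OF h] in \<open>simp add: F_def\<close>)
      then have F0: "F = 0" by (auto simp: zero_fun_def)
      have "h = Lf (sM n) (Lf (muM n) h) + F" unfolding F_def by simp
      also have "\<dots> = Lf (sM n) (Lf (muM n) h) + Lf (\<lambda>T. T) 0" using F0 by (simp add: Lf_def zero_fun_def)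
      finally show ?thesis using muH[OF h] by blast
    qed
    have ML2: "Lf (muM n) (Lf (\<lambda>T. T) y) = 0" if "y \<in> {0}" for y :: "'n \<Rightarrow> nat list \<Rightarrow> complex"
      using that lin_zero[OF lin_muM] by (simp add: Lf_def zero_fun_def)
    have inj2: "y = 0" if "y \<in> {0}" "Lf (\<lambda>T. T) y = 0" for y :: "'n \<Rightarrow> nat list \<Rightarrow> complex"
      using that by simp
    have "fs.dim ?H = fs.dim ?H1 + fs.dim ({0} :: ('n \<Rightarrow> nat list \<Rightarrow> complex) set)"
      by (rule fs.dim_split[OF sub1 sub2 fin1 fin2 lin_Lf[OF lin_sM] lin_Lf[OF linid] lin_Lf[OF lin_muM]
            im1 im2 cover ML1 ML2 inj2])
    moreover have "fs.dim ({0} :: ('n \<Rightarrow> nat list \<Rightarrow> complex) set) = 0"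
      by (rule fs.dim_unique[of "{}"]) (simp_all add: fs.span_empty fs.independent_empty)
    ultimately show ?thesis using n by simp
  qed
qed

lemma quat_det:
  "quat_mat q $ 1 $ 1 * quat_mat q $ 2 $ 2 - quat_mat q $ 1 $ 2 * quat_mat q $ 2 $ 1
   = complex_of_real ((q 0)^2 + (q 1)^2 + (q 2)^2 + (q 3)^2)"
  by (simp add: quat_mat_def complex_eq_iff power2_eq_square)

lemma sq_abs: "\<bar>x::real\<bar> = c \<Longrightarrow> x^2 = c^2"
  using power2_abs[of x] by simp

lemma sum4: fixes f :: "nat \<Rightarrow> real" shows "(\<Sum>i<4. f i) = f 0 + f 1 + f 2 + (f 3 :: real)"
  by (simp add: numeral_eq_Suc)

lemma less4_cases: "(i::nat) < 4 \<Longrightarrow> i = 0 \<or> i = 1 \<or> i = 2 \<or> i = 3" by auto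

lemma golden_facts: "golden^2 = golden + 1" "golden > 0"
proof -
  have s: "sqrt 5 ^ 2 = 5" by simp
  show "golden^2 = golden + 1" unfolding golden_def
    by (simp add: power2_eq_square field_simps)
  show "golden > 0" unfolding golden_def by (simp add: add_pos_nonneg)
qed

lemma icosa_sum: "(\<Sum>i<4. ([0, 1/2, 1 / (2 * golden), golden / 2] ! i)^2) = (1::real)"
proof -
  have g: "golden^2 = golden + 1" "golden > 0" using golden_facts by auto
  have inv: "1 / golden = golden - 1"
    using g by (simp add: field_simps power2_eq_square)
  have "(1 / (2 * golden))^2 = (1 / golden)^2 / 4" by (simp add: power2_eq_square)
  also have "\<dots> = (golden - 1)^2 / 4" by (simp only: inv)
  finally have "(1 / (2 * golden))^2 = (golden - 1)^2 / 4" .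
  then have "(\<Sum>i<4. ([0, 1/2, 1 / (2 * golden), golden / 2] ! i)^2) = 1/4 + (golden - 1)^2/4 + golden^2/4"
    by (simp add: sum4 power_divide numeral_eq_Suc)
  also have "\<dots> = (1 + ((golden - 1)^2 + golden^2)) / 4" by (simp add: field_simps)
  also have "(golden - 1)^2 + golden^2 = 2 * golden^2 - 2 * golden + 1"
    by (simp add: power2_eq_square algebra_simps)
  also have "\<dots> = 3" using g(1) by simp
  finally show ?thesis by simp
qed

lemma norm_units:
  assumes "q \<in> hurwitz_units \<union> octa_extra \<union> icosa_extra"
  shows "(q 0)^2 + (q 1)^2 + (q 2)^2 + (q 3)^2 = 1"
proof -
  have key: "(\<Sum>i<4. (q i)^2) = 1"
  proof -
    consider (h1) "\<exists>a<4. \<bar>q a\<bar> = 1 \<and> (\<forall>b<4. b \<noteq> a \<longrightarrow> q b = 0)"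
      | (h2) "\<forall>a<4. \<bar>q a\<bar> = 1/2" | (o) "q \<in> octa_extra" | (i) "q \<in> icosa_extra"
      using assms unfolding hurwitz_units_def by blast
    then show ?thesis
    proof cases
      case h1
      then obtain a where a: "a < 4" "\<bar>q a\<bar> = 1" "\<forall>b<4. b \<noteq> a \<longrightarrow> q b = 0" by blast
      have "(\<Sum>i<4. (q i)^2) = (\<Sum>i<4. if i = a then 1 else 0)"
        using a sq_abs[OF a(2)] by (intro sum.cong) auto
      also have "\<dots> = 1" using a(1) by simp
      finally show ?thesis .
    next
      case h2
      have "(\<Sum>i<4. (q i)^2) = (\<Sum>i<(4::nat). (1/4::real))"
      proof (intro sum.cong refl)
        fix i assume "i \<in> {..<(4::nat)}"
        then have "\<bar>q i\<bar> = 1/2" using h2 by auto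
        then have "(q i)^2 = (1/2)^2" by (rule sq_abs)
        then show "(q i)^2 = 1/4" by (simp add: power_divide)
      qed
      then show ?thesis by simp
    next
      case o
      then obtain a b where ab: "a < 4" "b < 4" "a \<noteq> b" "\<bar>q a\<bar> = 1 / sqrt 2" "\<bar>q b\<bar> = 1 / sqrt 2"
        "\<forall>c<4. c \<noteq> a \<and> c \<noteq> b \<longrightarrow> q c = 0"
        unfolding octa_extra_def by blast
      have "(\<Sum>i<4. (q i)^2) = (\<Sum>i<4. if i = a then 1/2 else 0) + (\<Sum>i<4. if i = b then 1/2 else 0)"
        unfolding sum.distrib[symmetric]
        using ab sq_abs[OF ab(4)] sq_abs[OF ab(5)] by (intro sum.cong) (auto simp: power_divide)
      also have "\<dots> = 1" using ab(1,2) by simp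
      finally show ?thesis .
    next
      case i
      then obtain p where p: "p permutes {..<4}"
        "\<forall>a<4. \<bar>q a\<bar> = [0, 1/2, 1 / (2 * golden), golden / 2] ! (p a)"
        unfolding icosa_extra_def by blast
      let ?L = "[0, 1/2, 1 / (2 * golden), golden / 2] :: real list"
      have "(\<Sum>i<4. (q i)^2) = (\<Sum>i<4. (?L ! (p i))^2)"
      proof (intro sum.cong refl)
        fix i assume "i \<in> {..<(4::nat)}"
        then have "\<bar>q i\<bar> = ?L ! (p i)" using p(2) by auto
        then show "(q i)^2 = (?L ! (p i))^2" by (rule sq_abs)
      qed
      also have "\<dots> = (\<Sum>i<4. (?L ! i)^2)"
        using sum.permute[OF p(1), of "\<lambda>i. (?L ! i)^2"] by (simp add: comp_def)
      also have "\<dots> = 1" by (rule icosa_sum)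
      finally show ?thesis .
    qed
  qed
  then show ?thesis by (simp add: sum4)
qed

lemma Gamma_det:
  assumes "\<Gamma> \<in> {binary_tetrahedral, binary_octahedral, binary_icosahedral}" "g \<in> \<Gamma>"
  shows "g$1$1 * g$2$2 - g$1$2 * g$2$1 = 1"
proof -
  have "\<Gamma> \<subseteq> quat_mat ` (hurwitz_units \<union> octa_extra \<union> icosa_extra)"
    using assms(1) unfolding binary_tetrahedral_def binary_octahedral_def binary_icosahedral_def by auto
  then obtain q where q: "q \<in> hurwitz_units \<union> octa_extra \<union> icosa_extra" "g = quat_mat q" using assms(2) by blast
  have n: "(q 0)^2 + (q 1)^2 + (q 2)^2 + (q 3)^2 = 1" using norm_units[OF q(1)] .
  show ?thesis using quat_det[of q, unfolded n] q(2) by simp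
qed

lemma negI_in:
  assumes "\<Gamma> \<in> {binary_tetrahedral, binary_octahedral, binary_icosahedral}"
  shows "- mat 1 \<in> \<Gamma>"
proof -
  define q :: "nat \<Rightarrow> real" where "q = (\<lambda>i. if i = 0 then -1 else 0)"
  have qh: "q \<in> hurwitz_units" unfolding hurwitz_units_def q_def by (rule CollectI, rule disjI1, rule exI[of _ 0]) auto
  have "quat_mat q = - mat 1"
    unfolding quat_mat_def q_def by (simp add: vec_eq_iff forall_2 mat_def complex_eq_iff)
  then have "- mat 1 \<in> quat_mat ` hurwitz_units" using qh by force
  then show ?thesis using assms
    unfolding binary_tetrahedral_def binary_octahedral_def binary_icosahedral_def by auto
qed

theorem mainTheorem7:
  fixes \<Gamma> :: "(complex^2^2) set" and \<rho> :: "complex^2^2 \<Rightarrow> complex^'n^'n"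
  assumes "\<Gamma> \<in> {binary_tetrahedral, binary_octahedral, binary_icosahedral}"
    and "irred_rep \<Gamma> \<rho>"
  shows "Pser \<Gamma> \<rho> 3 sym2_mat =
           (if spinorial \<rho> then 0
            else Abs_fps (\<lambda>n. fps_nth (Pser \<Gamma> \<rho> 2 std_mat) (2 * n)) * inverse (1 - fps_X ^ 2))"
proof -
  interpret fs: vector_space "fscale :: complex \<Rightarrow> ('n \<Rightarrow> nat list \<Rightarrow> complex) \<Rightarrow> _"
    by (rule fscale_vector_space)
  have det: "\<And>g. g \<in> \<Gamma> \<Longrightarrow> g$1$1 * g$2$2 - g$1$2 * g$2$1 = 1"
    using Gamma_det[OF assms(1)] by blast
  show ?thesis
  proof (cases "spinorial \<rho>")
    case True
    have g: "- mat 1 \<in> \<Gamma>" by (rule negI_in[OF assms(1)])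
    have r: "\<rho> (- mat 1) = - mat 1" using True by (simp add: spinorial_def)
    have Z: "HomG \<Gamma> \<rho> 3 sym2_mat n = {0}" for n
    proof
      show "{0} \<subseteq> HomG \<Gamma> \<rho> 3 sym2_mat n" using HomG_zero by simp
      show "HomG \<Gamma> \<rho> 3 sym2_mat n \<subseteq> {0}"
      proof
        fix f assume f: "f \<in> HomG \<Gamma> \<rho> 3 sym2_mat n"
        have "f = 0"
        proof (intro ext)
          fix a xs
          have "(\<lambda>xs. \<Sum>b\<in>UNIV. (\<rho> (- mat 1)) $ b $ a * f b xs) = tensor_act 3 n (sym2_mat (- mat 1)) (f a)"
            by (rule HomG_D2[OF f g])
          also have "\<dots> = f a" by (rule act_neg_id[OF HomG_D1[OF f]])
          finally have 1: "(\<Sum>b\<in>UNIV. (\<rho> (- mat 1)) $ b $ a * f b xs) = f a xs" by (rule fun_cong)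
          have "(\<Sum>b\<in>UNIV. (\<rho> (- mat 1)) $ b $ a * f b xs) = (\<Sum>b\<in>UNIV. if b = a then - f a xs else 0)"
            unfolding r by (intro sum.cong refl) (simp add: mat_def)
          also have "\<dots> = - f a xs" by simp
          finally have "f a xs = - f a xs" using 1 by simp
          then show "f a xs = 0 a xs" by simp
        qed
        then show "f \<in> {0}" by simp
      qed
    qed
    have d0: "fs.dim ({0} :: ('n \<Rightarrow> nat list \<Rightarrow> complex) set) = 0"
      by (rule fs.dim_unique[of "{}"]) (simp_all add: fs.span_empty fs.independent_empty)
    have "Pser \<Gamma> \<rho> 3 sym2_mat = 0"
      unfolding Pser_def Z d0 by (simp add: fps_eq_iff)
    then show ?thesis using True by simp
  next
    case False
    let ?P3 = "Pser \<Gamma> \<rho> 3 sym2_mat" and ?P2 = "Pser \<Gamma> \<rho> 2 std_mat"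
    let ?E = "Abs_fps (\<lambda>n. fps_nth ?P2 (2*n))"
    have rec: "fps_nth ?P3 n = fps_nth ?P2 (2*n) + (if 2 \<le> n then fps_nth ?P3 (n-2) else 0)" for n
      unfolding Pser_def using dim_rec[OF det, of \<Gamma> \<rho> n] by simp
    have mul: "?P3 * (1 - fps_X^2) = ?E"
    proof (rule fps_ext)
      fix n
      have "fps_nth (?P3 * (1 - fps_X^2)) n = fps_nth ?P3 n - (if n < 2 then 0 else fps_nth ?P3 (n-2))"
        by (simp add: right_diff_distrib fps_X_power_mult_right_nth)
      then show "fps_nth (?P3 * (1 - fps_X^2)) n = fps_nth ?E n" using rec[of n] by auto
    qed
    have inv: "(1 - fps_X^2 :: rat fps) * inverse (1 - fps_X^2) = 1"
      by (rule inverse_mult_eq_1') simp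
    have "?P3 = ?P3 * ((1 - fps_X^2) * inverse (1 - fps_X^2))" using inv by simp
    also have "\<dots> = ?E * inverse (1 - fps_X^2)" using mul by (simp add: mult.assoc[symmetric])
    finally show ?thesis using False by simp
  qed
qed

end
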